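(* Let $(W,S)$ be a Coxeter system with $S$ finite and take $t=0$ in the construction below. Then for every $x\in C_W$, the linear map $\rho(x)$ sends each basis vector $\varepsilon_J$ ($J\in\mathcal F(S)$) to $\pm\varepsilon_{K}$ for some $K\in\mathcal F(S)$. Consequently, the image $\rho(C_W)$ is finite; in particular, if $C_W$ is infinite then $\rho$ is not faithful, and the restriction of $\rho$ to any infinite subgroup of $C_W$ is not faithful.
   Context: For $I\subset S$, $W_I$ is the subgroup generated by $I$; when finite, $w_I$ is its longest element. A nonempty $I\subset S$ is connected if $W_I$ is finite and there is no decomposition $I=J\cup K$ with $J,K$ disjoint nonempty and $W_I=W_J\times W_K$ (every element of $J$ commutes with every element of $K$). $\mathcal F(S)$ is the set of connected subsets. For $J\subset I$ with $W_I$ finite, $w_I(J):=\{w_Isw_I:s\in J\}\subset S$. The generalized cactus group $C_W$ is generated by $\{\gamma_I:I\in\mathcal F(S)\}$ with relations $\gamma_I^2=1$ and $\gamma_I\gamma_J=\gamma_J\gamma_{w_J(I)}$ whenever $I\subset J$ or $W_{I\cup J}=W_I\times W_J$. $E$ is the real vector space with basis $\{\varepsilon_I\}_{I\in\mathcal F(S)}$, equipped with the standard inner product $B_0$ for which this basis is orthonormal. $\mathcal C(I):=\{J\in\mathcal F(S):J\subsetneq I\}$, $E_I$ is the span of $\{\varepsilon_J-\varepsilon_{w_I(J)}:J\in\mathcal C(I)\}$, $F_I$ is the orthogonal complement of $\mathbb R\varepsilon_I\oplus E_I$, $\rho_I$ is $-\mathrm{id}$ on $\mathbb R\varepsilon_I\oplus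 E_I$ and $\mathrm{id}$ on $F_I$, and $\rho:C_W\to GL(E)$ is the homomorphism with $\rho(\gamma_I)=\rho_I$. *)

theory Defs
  imports "HOL-Algebra.Multiplicative_Group" "HOL-Algebra.Generated_Groups" "HOL-Library.Function_Algebras"
begin

text \<open>The presentation is expressed by its universal property; since the presented group
is countable, it suffices to test against groups whose carrier is a set of naturals.\<close>

definition coxeter_system :: "'w monoid \<Rightarrow> 'w set \<Rightarrow> bool" where
  "coxeter_system W S \<longleftrightarrow>
     group W \<and> finite S \<and> S \<subseteq> carrier W \<and> generate W S = carrier W \<and>
     (\<forall>s\<in>S. s \<noteq> \<one>\<^bsub>W\<^esub> \<and> s \<otimes>\<^bsub>W\<^esub> s = \<one>\<^bsub>W\<^esub>) \<and>
     (\<forall>(G :: nat monoid) (f :: 'w \<Rightarrow> nat).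
        group G \<longrightarrow> f ` S \<subseteq> carrier G \<longrightarrow>
        (\<forall>s\<in>S. \<forall>t\<in>S. group.ord W (s \<otimes>\<^bsub>W\<^esub> t) \<noteq> 0 \<longrightarrow>
            (f s \<otimes>\<^bsub>G\<^esub> f t) [^]\<^bsub>G\<^esub> group.ord W (s \<otimes>\<^bsub>W\<^esub> t) = \<one>\<^bsub>G\<^esub>) \<longrightarrow>
        (\<exists>h \<in> hom W G. \<forall>s\<in>S. h s = f s))"

definition cox_length :: "'w monoid \<Rightarrow> 'w set \<Rightarrow> 'w \<Rightarrow> nat" where
  "cox_length W S w = (LEAST n. \<exists>ws. length ws = n \<and> set ws \<subseteq> S \<and>
                         foldr (\<otimes>\<^bsub>W\<^esub>) ws \<one>\<^bsub>W\<^esub> = w)"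

definition longest :: "'w monoid \<Rightarrow> 'w set \<Rightarrow> 'w set \<Rightarrow> 'w" where
  "longest W S I = (THE w. w \<in> generate W I \<and>
       (\<forall>v \<in> generate W I. cox_length W S v \<le> cox_length W S w))"

definition conj_set :: "'w monoid \<Rightarrow> 'w set \<Rightarrow> 'w set \<Rightarrow> 'w set \<Rightarrow> 'w set" where
  "conj_set W S I J = (\<lambda>s. longest W S I \<otimes>\<^bsub>W\<^esub> s \<otimes>\<^bsub>W\<^esub> longest W S I) ` J"

text \<open>W_{I \<union> J} = W_I \<times> W_J, in the sense used in the paper: I, J disjoint and
every element of I commutes with every element of J.\<close>
definition commuting_split :: "'w monoid \<Rightarrow> 'w set \<Rightarrow> 'w set \<Rightarrow> bool" where
  "commuting_split W J K \<longleftrightarrow> J \<inter> K = {} \<and>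
     (\<forall>s\<in>J. \<forall>t\<in>K. s \<otimes>\<^bsub>W\<^esub> t = t \<otimes>\<^bsub>W\<^esub> s)"

definition connected_subset :: "'w monoid \<Rightarrow> 'w set \<Rightarrow> 'w set \<Rightarrow> bool" where
  "connected_subset W S I \<longleftrightarrow> I \<noteq> {} \<and> I \<subseteq> S \<and> finite (generate W I) \<and>
     \<not> (\<exists>J K. J \<noteq> {} \<and> K \<noteq> {} \<and> I = J \<union> K \<and> commuting_split W J K)"

definition conn :: "'w monoid \<Rightarrow> 'w set \<Rightarrow> 'w set set" where
  "conn W S = {I. connected_subset W S I}"

text \<open>C (with generators gamma) is the generalized cactus group C_W: it is generated by
gamma ` F(S), the defining relations hold, and it has the universal property of the
presentation (tested against groups on nat, which suffices since C_W is countable).\<close>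

definition cactus_rels :: "'w monoid \<Rightarrow> 'w set \<Rightarrow> ('c, 'b) monoid_scheme \<Rightarrow> ('w set \<Rightarrow> 'c) \<Rightarrow> bool" where
  "cactus_rels W S G g \<longleftrightarrow>
     g ` conn W S \<subseteq> carrier G \<and>
     (\<forall>I\<in>conn W S. g I \<otimes>\<^bsub>G\<^esub> g I = \<one>\<^bsub>G\<^esub>) \<and>
     (\<forall>I\<in>conn W S. \<forall>J\<in>conn W S. (I \<subseteq> J \<or> commuting_split W I J) \<longrightarrow>
        g I \<otimes>\<^bsub>G\<^esub> g J = g J \<otimes>\<^bsub>G\<^esub> g (conj_set W S J I))"

definition cactus_group :: "'w monoid \<Rightarrow> 'w set \<Rightarrow> 'c monoid \<Rightarrow> ('w set \<Rightarrow> 'c) \<Rightarrow> bool" where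
  "cactus_group W S C \<gamma> \<longleftrightarrow>
     group C \<and> cactus_rels W S C \<gamma> \<and> generate C (\<gamma> ` conn W S) = carrier C \<and>
     (\<forall>(G :: nat monoid) (f :: 'w set \<Rightarrow> nat). group G \<longrightarrow> cactus_rels W S G f \<longrightarrow>
        (\<exists>h \<in> hom C G. \<forall>I\<in>conn W S. h (\<gamma> I) = f I))"

text \<open>E = real vector space with basis eps_I, I in F(S): modelled as real-valued
functions on sets vanishing outside F(S).\<close>

type_synonym 'w vec = "'w set \<Rightarrow> real"

definition Espace :: "'w monoid \<Rightarrow> 'w set \<Rightarrow> 'w vec set" where
  "Espace W S = {v. \<forall>J. J \<notin> conn W S \<longrightarrow> v J = 0}"

definition eps :: "'w set \<Rightarrow> 'w vec" where
  "eps I = (\<lambda>J. if J = I then 1 else 0)"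

definition vspan :: "'w vec set \<Rightarrow> 'w vec set" where
  "vspan X = module.span (\<lambda>(c::real) (v::'w vec) J. c * v J) X"

definition B0 :: "'w monoid \<Rightarrow> 'w set \<Rightarrow> 'w vec \<Rightarrow> 'w vec \<Rightarrow> real" where
  "B0 W S u v = (\<Sum>J\<in>conn W S. u J * v J)"

definition Csub :: "'w monoid \<Rightarrow> 'w set \<Rightarrow> 'w set \<Rightarrow> 'w set set" where
  "Csub W S I = {J \<in> conn W S. J \<subset> I}"

definition E_I :: "'w monoid \<Rightarrow> 'w set \<Rightarrow> 'w set \<Rightarrow> 'w vec set" where
  "E_I W S I = vspan ((\<lambda>J. eps J - eps (conj_set W S I J)) ` Csub W S I)"

definition U_I :: "'w monoid \<Rightarrow> 'w set \<Rightarrow> 'w set \<Rightarrow> 'w vec set" where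
  "U_I W S I = {(\<lambda>J. c * eps I J) + e | c e. e \<in> E_I W S I}"

definition F_I :: "'w monoid \<Rightarrow> 'w set \<Rightarrow> 'w set \<Rightarrow> 'w vec set" where
  "F_I W S I = {f \<in> Espace W S. \<forall>u \<in> U_I W S I. B0 W S f u = 0}"

definition rho_I :: "'w monoid \<Rightarrow> 'w set \<Rightarrow> 'w set \<Rightarrow> 'w vec \<Rightarrow> 'w vec" where
  "rho_I W S I v = (THE w. \<exists>u \<in> U_I W S I. \<exists>f \<in> F_I W S I. v = u + f \<and> w = f - u)"

end

theory Submission
  imports Defs "HOL-Library.Countable_Set"
begin


definition wprod :: "('a,'b) monoid_scheme \<Rightarrow> 'a list \<Rightarrow> 'a" where
  "wprod G as = foldr (\<otimes>\<^bsub>G\<^esub>) as \<one>\<^bsub>G\<^esub>"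

lemma wprod_Nil[simp]: "wprod G [] = \<one>\<^bsub>G\<^esub>" and wprod_Cons[simp]: "wprod G (a#as) = a \<otimes>\<^bsub>G\<^esub> wprod G as"
  by (simp_all add: wprod_def)

context group begin

lemma wprod_closed[simp,intro]: "set as \<subseteq> carrier G \<Longrightarrow> wprod G as \<in> carrier G"
  by (induct as) auto

lemma wprod_append: "set as \<subseteq> carrier G \<Longrightarrow> set bs \<subseteq> carrier G \<Longrightarrow> wprod G (as @ bs) = wprod G as \<otimes> wprod G bs"
  by (induct as) (auto simp: m_assoc)

lemma inv_invol: "a \<in> carrier G \<Longrightarrow> a \<otimes> a = \<one> \<Longrightarrow> inv a = a"
  by (rule inv_equality) auto

lemma wprod_rev: "\<forall>a\<in>set as. a \<in> carrier G \<and> a \<otimes> a = \<one> \<Longrightarrow> inv (wprod G as) = wprod G (rev as)"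
proof (induct as)
  case (Cons a as)
  then show ?case by (simp add: inv_mult_group wprod_append inv_invol subset_iff)
qed simp

lemma generate_wprod:
  assumes A: "A \<subseteq> carrier G" "\<forall>a\<in>A. a \<otimes> a = \<one>"
  shows "generate G A = {wprod G as | as. set as \<subseteq> A}"
proof
  show "generate G A \<subseteq> {wprod G as | as. set as \<subseteq> A}"
  proof
    fix x assume "x \<in> generate G A"
    then show "x \<in> {wprod G as | as. set as \<subseteq> A}"
    proof induct
      case one then show ?case by (auto intro!: exI[of _ "[]"])
    next
      case (incl h) then show ?case using A by (auto intro!: exI[of _ "[h]"])
    next
      case (inv h) then show ?case using A by (auto intro!: exI[of _ "[h]"] simp: inv_invol subset_iff)
    next
      case (eng h1 h2)
      then obtain as bs where "set as \<subseteq> A" "h1 = wprod G as" "set bs \<subseteq> A" "h2 = wprod G bs" by auto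
      then show ?case using A by (auto intro!: exI[of _ "as@bs"] simp: wprod_append)
    qed
  qed
next
  show "{wprod G as | as. set as \<subseteq> A} \<subseteq> generate G A"
  proof safe
    fix as assume "set as \<subseteq> A"
    then show "wprod G as \<in> generate G A"
      by (induct as) (auto intro: generate.intros)
  qed
qed

end




lemma (in group) conj_iff:
  assumes "a \<in> carrier G" "b \<in> carrier G" "a \<otimes> b = \<one>" "x \<in> carrier G" "y \<in> carrier G"
  shows "(a \<otimes> x \<otimes> b = y) \<longleftrightarrow> (x = b \<otimes> y \<otimes> a)"
proof -
  have ba: "b \<otimes> a = \<one>" using assms inv_comm by blast
  show ?thesis
  proof
    assume h: "a \<otimes> x \<otimes> b = y"
    have "b \<otimes> (a \<otimes> x \<otimes> b) \<otimes> a = (b \<otimes> a) \<otimes> x \<otimes> (b \<otimes> a)" using assms by (simp add: m_assoc)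
    then show "x = b \<otimes> y \<otimes> a" using ba assms h by simp
  next
    assume h: "x = b \<otimes> y \<otimes> a"
    have eq: "a \<otimes> (b \<otimes> y \<otimes> a) \<otimes> b = (a \<otimes> b) \<otimes> y \<otimes> (a \<otimes> b)" using assms(1,2,4,5) by (simp add: m_assoc)
    have "a \<otimes> x \<otimes> b = (a \<otimes> b) \<otimes> y \<otimes> (a \<otimes> b)" using eq h by simp
    also have "\<dots> = y" using assms by simp
    finally show "a \<otimes> x \<otimes> b = y" .
  qed
qed

lemma (in group) invol_cancel: "a \<in> carrier G \<Longrightarrow> a \<otimes> a = \<one> \<Longrightarrow> x \<in> carrier G \<Longrightarrow> a \<otimes> (a \<otimes> x) = x"
  by (simp add: m_assoc[symmetric])

lemma sum_shift2: "(\<Sum>j<Suc (Suc k). F j) = F 0 + (F (Suc 0) + (\<Sum>j<k. F (Suc (Suc j))))"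
  by (simp only: sum.lessThan_Suc_shift)

lemma sum_split_add: "(\<Sum>j<a+b. f j) = (\<Sum>j<a. f j) + (\<Sum>j<b. f (a+j::nat))"
  by (induct b) (simp_all add: add.assoc)

locale cox =
  fixes W :: "'w monoid" (structure) and S :: "'w set"
  assumes cox: "coxeter_system W S"
begin

sublocale group W using cox by (simp add: coxeter_system_def)

lemma finS: "finite S" and SW: "S \<subseteq> carrier W" and genS: "generate W S = carrier W"
  using cox by (simp_all add: coxeter_system_def)

lemma Sinv: "s \<in> S \<Longrightarrow> s \<otimes> s = \<one>" and Sne: "s \<in> S \<Longrightarrow> s \<noteq> \<one>"
  using cox by (auto simp: coxeter_system_def)

lemma SW': "s \<in> S \<Longrightarrow> s \<in> carrier W" using SW by auto

lemma carrier_wprod: "carrier W = {wprod W as | as. set as \<subseteq> S}"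
  using generate_wprod[OF SW] Sinv genS by auto

definition pi :: "'w \<Rightarrow> 'w \<times> bool \<Rightarrow> 'w \<times> bool" where
  "pi s = (\<lambda>(r,e). if r \<in> carrier W then (s \<otimes> r \<otimes> s, e \<noteq> (r = s)) else (r,e))"

lemma pi_pi: assumes "s \<in> S" shows "pi s \<circ> pi s = id"
proof
  fix x :: "'w \<times> bool"
  obtain r e where x: "x = (r,e)" by force
  have sc: "s \<in> carrier W" using assms SW by auto
  show "(pi s \<circ> pi s) x = id x"
  proof (cases "r \<in> carrier W")
    case True
    have 1: "s \<otimes> (s \<otimes> r \<otimes> s) \<otimes> s = r" using True sc Sinv[OF assms]
      by (simp add: m_assoc invol_cancel)
    have 2: "(s \<otimes> r \<otimes> s = s) = (r = s)"
      using conj_iff[OF sc sc Sinv[OF assms] True sc] sc Sinv[OF assms] by (simp add: m_assoc)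
    show ?thesis using True sc 1 2 by (auto simp: x pi_def)
  qed (simp add: x pi_def)
qed

lemma dihedral:
  assumes s: "s \<in> carrier W" "s \<otimes> s = \<one>" and t: "t \<in> carrier W" "t \<otimes> t = \<one>"
  shows "r \<in> carrier W \<Longrightarrow> ((pi s \<circ> pi t) ^^ n) (r, e) =
     ((s \<otimes> t) [^] n \<otimes> r \<otimes> (t \<otimes> s) [^] n,
      e \<noteq> odd (\<Sum>j<2*n. if (t \<otimes> s) [^] j \<otimes> t = r then 1 else (0::nat)))"
proof (induct n arbitrary: r e)
  case 0 then show ?case by simp
next
  case (Suc n)
  define u where "u = s \<otimes> t"
  define v where "v = t \<otimes> s"
  have uc: "u \<in> carrier W" and vc: "v \<in> carrier W" using s t by (auto simp: u_def v_def)
  define r' where "r' = s \<otimes> (t \<otimes> r \<otimes> t) \<otimes> s"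
  have rc: "r \<in> carrier W" by fact
  have r'c: "r' \<in> carrier W" using s t rc by (simp add: r'_def)
  have step: "(pi s \<circ> pi t) (r, e) = (r', (e \<noteq> (r = t)) \<noteq> (t \<otimes> r \<otimes> t = s))"
    using rc s t by (simp add: pi_def r'_def)
  have IH: "((pi s \<circ> pi t) ^^ n) (r', e') = (u [^] n \<otimes> r' \<otimes> v [^] n,
      e' \<noteq> odd (\<Sum>j<2*n. if v [^] j \<otimes> t = r' then 1 else (0::nat)))" for e'
    unfolding u_def v_def by (rule Suc(1)[OF r'c])
  have A: "u [^] n \<otimes> r' \<otimes> v [^] n = u [^] Suc n \<otimes> r \<otimes> v [^] Suc n"
  proof -
    have e1: "u [^] Suc n = u [^] n \<otimes> u" by simp
    have e2: "v [^] Suc n = v \<otimes> v [^] n" by (rule nat_pow_Suc2[OF vc])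
    show ?thesis unfolding e1 e2 using uc vc s t rc by (simp add: r'_def u_def v_def m_assoc)
  qed
  have B1: "(t \<otimes> r \<otimes> t = s) = (v \<otimes> t = r)"
    using conj_iff[OF t(1) t(1) t(2) rc s(1)] s t rc by (auto simp: v_def m_assoc)
  have B2: "(v [^] Suc (Suc j) \<otimes> t = r) = (v [^] j \<otimes> t = r')" for j
  proof -
    have vj: "v [^] j \<in> carrier W" using vc by simp
    have "v [^] Suc (Suc j) \<otimes> t = v \<otimes> (v [^] j \<otimes> t) \<otimes> (s \<otimes> t)"
    proof -
      have "v [^] Suc (Suc j) \<otimes> t = v \<otimes> v [^] j \<otimes> (v \<otimes> t)"
        using vc t by (simp add: nat_pow_Suc2[OF vc, symmetric] m_assoc)
      also have "v \<otimes> t = t \<otimes> (s \<otimes> t)" using s t by (simp add: v_def m_assoc)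
      finally show ?thesis using vc vj s t by (simp add: m_assoc)
    qed
    moreover have "v \<otimes> (s \<otimes> t) = \<one>" using s t by (simp add: v_def m_assoc[symmetric]) (simp add: m_assoc)
    ultimately have "(v [^] Suc (Suc j) \<otimes> t = r) = (v [^] j \<otimes> t = (s \<otimes> t) \<otimes> r \<otimes> v)"
      using conj_iff[of v "s \<otimes> t" "v [^] j \<otimes> t" r] vc vj s t rc by simp
    also have "(s \<otimes> t) \<otimes> r \<otimes> v = r'" using s t rc by (simp add: r'_def v_def m_assoc)
    finally show ?thesis .
  qed
  have v1: "v [^] Suc 0 = v" using vc by simp
  have sumeq: "(\<Sum>j<2*Suc n. if v [^] j \<otimes> t = r then 1 else (0::nat)) =
      (if t = r then 1 else 0) + ((if v \<otimes> t = r then 1 else 0) +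
      (\<Sum>j<2*n. if v [^] j \<otimes> t = r' then 1 else (0::nat)))"
  proof -
    have "2 * Suc n = Suc (Suc (2 * n))" by simp
    then show ?thesis by (simp only: sum_shift2 B2 v1 nat_pow_0) (simp add: t(1))
  qed
  have e0: "((pi s \<circ> pi t)^^Suc n)(r,e) = ((pi s \<circ> pi t)^^n)((pi s \<circ> pi t)(r,e))"
    unfolding funpow_Suc_right by (rule comp_apply)
  show ?case unfolding u_def[symmetric] v_def[symmetric] e0 step IH A sumeq B1 by auto
qed

lemma dihedral_rel:
  assumes s: "s \<in> carrier W" "s \<otimes> s = \<one>" and t: "t \<in> carrier W" "t \<otimes> t = \<one>"
  shows "(pi s \<circ> pi t) ^^ ord (s \<otimes> t) = id"
proof
  fix x :: "'w \<times> bool"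
  obtain r e where x: "x = (r,e)" by force
  define m where "m = ord (s \<otimes> t)"
  have um: "(s \<otimes> t) [^] m = \<one>" using s t by (simp add: m_def)
  have vinv: "t \<otimes> s = inv (s \<otimes> t)" using s t by (simp add: inv_mult_group inv_invol)
  have vm: "(t \<otimes> s) [^] m = \<one>" using s t um by (simp add: vinv nat_pow_inv)
  show "((pi s \<circ> pi t) ^^ ord (s \<otimes> t)) x = id x"
  proof (cases "r \<in> carrier W")
    case False
    have "((pi s \<circ> pi t) ^^ k) (r, e) = (r,e)" for k
      using False by (induct k) (simp_all add: pi_def)
    then show ?thesis by (simp add: x)
  next
    case True
    define f :: "nat \<Rightarrow> nat" where "f j = (if (t \<otimes> s) [^] j \<otimes> t = r then 1 else (0::nat))" for j
    have per: "f (m + j) = f j" for j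
      using s t by (simp add: f_def nat_pow_mult[symmetric] vm)
    have "(\<Sum>j<2*m. f j) = 2 * (\<Sum>j<m. f j)"
      using sum_split_add[where a=m and b=m and f=f] per by (simp add: mult_2)
    then have ev: "even (\<Sum>j<2*m. f j)" by simp
    show ?thesis using dihedral[OF s t True, of m e] um vm True ev
      by (simp add: x m_def[symmetric] f_def)
  qed
qed

end



context cox begin

definition pword :: "'w list \<Rightarrow> ('w \<times> bool \<Rightarrow> 'w \<times> bool)" where
  "pword as = foldr (\<lambda>a f. pi a \<circ> f) as id"

lemma pword_Nil[simp]: "pword [] = id" and pword_Cons[simp]: "pword (a#as) = pi a \<circ> pword as"
  by (simp_all add: pword_def)

lemma pword_append: "pword (as @ bs) = pword as \<circ> pword bs"
  by (induct as) (simp_all add: comp_assoc)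

lemma pword_rev: "set as \<subseteq> S \<Longrightarrow> pword (rev as) \<circ> pword as = id"
proof (induct as)
  case (Cons a as)
  have "pword (rev (a#as)) \<circ> pword (a#as) = pword (rev as) \<circ> (pi a \<circ> pi a) \<circ> pword as"
    by (simp add: pword_append comp_assoc)
  also have "\<dots> = pword (rev as) \<circ> pword as"
  proof -
    have "pi a \<circ> pi a = id" using Cons.prems pi_pi by simp
    then show ?thesis by (simp only: comp_id)
  qed
  also have "\<dots> = id" by (rule Cons.hyps) (use Cons.prems in simp)
  finally show ?case .
qed simp

definition G0 where "G0 = pword ` {as. set as \<subseteq> S}"

lemma countG0: "countable G0"
proof -
  have "{as. set as \<subseteq> S} = lists S" by auto
  then show ?thesis unfolding G0_def using finS by (simp add: countable_finite)
qed

lemma G0_id: "id \<in> G0" unfolding G0_def by (auto intro!: image_eqI[of _ _ "[]"])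

lemma G0_comp: "f \<in> G0 \<Longrightarrow> g \<in> G0 \<Longrightarrow> f \<circ> g \<in> G0"
  unfolding G0_def by (auto simp: pword_append[symmetric] intro!: imageI)

lemma G0_inv: "f \<in> G0 \<Longrightarrow> \<exists>g\<in>G0. g \<circ> f = id"
proof -
  assume "f \<in> G0"
  then obtain as where as: "set as \<subseteq> S" "f = pword as" by (auto simp: G0_def)
  then have "pword (rev as) \<in> G0" by (auto simp: G0_def intro!: imageI)
  then show ?thesis using pword_rev[OF as(1)] as by blast
qed

lemma pi_G0: "s \<in> S \<Longrightarrow> pi s \<in> G0"
  unfolding G0_def by (auto intro!: image_eqI[of _ _ "[s]"])

lemma G0_pow: "f \<in> G0 \<Longrightarrow> f ^^ n \<in> G0"
  by (induct n) (simp_all add: G0_id G0_comp)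

definition enc where "enc = to_nat_on G0"
definition dec where "dec = from_nat_into G0"

lemma dec_enc[simp]: "f \<in> G0 \<Longrightarrow> dec (enc f) = f"
  using countG0 by (simp add: enc_def dec_def)

definition Gn :: "nat monoid" where
  "Gn = \<lparr>carrier = enc ` G0, mult = (\<lambda>a b. enc (dec a \<circ> dec b)), one = enc id\<rparr>"

lemma Gn_simps: "carrier Gn = enc ` G0" "a \<otimes>\<^bsub>Gn\<^esub> b = enc (dec a \<circ> dec b)" "\<one>\<^bsub>Gn\<^esub> = enc id"
  by (simp_all add: Gn_def)

lemma group_Gn: "group Gn"
proof (rule groupI)
  show "\<exists>y\<in>carrier Gn. y \<otimes>\<^bsub>Gn\<^esub> x = \<one>\<^bsub>Gn\<^esub>" if x: "x \<in> carrier Gn" for x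
  proof -
    obtain f where f: "f \<in> G0" "x = enc f" using x unfolding Gn_simps by blast
    obtain g where g: "g \<in> G0" "g \<circ> f = id" using G0_inv[OF f(1)] by auto
    have "enc g \<in> carrier Gn" "enc g \<otimes>\<^bsub>Gn\<^esub> x = \<one>\<^bsub>Gn\<^esub>" using f g by (auto simp: Gn_simps)
    then show ?thesis by blast
  qed
qed (auto simp: Gn_simps G0_comp G0_id comp_assoc)

lemma Gn_mult: "f \<in> G0 \<Longrightarrow> g \<in> G0 \<Longrightarrow> enc f \<otimes>\<^bsub>Gn\<^esub> enc g = enc (f \<circ> g)"
  by (simp add: Gn_simps)

lemma Gn_pow: "f \<in> G0 \<Longrightarrow> enc f [^]\<^bsub>Gn\<^esub> n = enc (f ^^ n)"
proof (induct n)
  case (Suc n)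
  then show ?case by (simp add: Gn_simps G0_pow funpow_Suc_right comp_def del: funpow.simps)
qed (simp add: Gn_simps)

lemma hom_exists: "\<exists>h\<in>hom W Gn. \<forall>s\<in>S. h s = enc (pi s)"
proof -
  have U: "\<forall>(G :: nat monoid) (f :: 'w \<Rightarrow> nat).
        group G \<longrightarrow> f ` S \<subseteq> carrier G \<longrightarrow>
        (\<forall>s\<in>S. \<forall>t\<in>S. ord (s \<otimes> t) \<noteq> 0 \<longrightarrow>
            (f s \<otimes>\<^bsub>G\<^esub> f t) [^]\<^bsub>G\<^esub> ord (s \<otimes> t) = \<one>\<^bsub>G\<^esub>) \<longrightarrow>
        (\<exists>h \<in> hom W G. \<forall>s\<in>S. h s = f s)"
    using cox by (simp add: coxeter_system_def)
  have rel: "(enc (pi s) \<otimes>\<^bsub>Gn\<^esub> enc (pi t)) [^]\<^bsub>Gn\<^esub> ord (s \<otimes> t) = \<one>\<^bsub>Gn\<^esub>"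
    if "s \<in> S" "t \<in> S" for s t
  proof -
    have "(enc (pi s) \<otimes>\<^bsub>Gn\<^esub> enc (pi t)) [^]\<^bsub>Gn\<^esub> ord (s \<otimes> t) = enc ((pi s \<circ> pi t) ^^ ord (s \<otimes> t))"
      using that by (simp add: Gn_mult pi_G0 G0_comp Gn_pow)
    also have "\<dots> = enc id" using dihedral_rel[of s t] that SW' Sinv by simp
    finally show ?thesis by (simp add: Gn_simps)
  qed
  have A: "(\<lambda>s. enc (pi s)) ` S \<subseteq> carrier Gn" using pi_G0 by (auto simp: Gn_simps)
  have B: "\<And>s t. s \<in> S \<Longrightarrow> t \<in> S \<Longrightarrow> ord (s \<otimes> t) \<noteq> 0 \<Longrightarrow>
      (enc (pi s) \<otimes>\<^bsub>Gn\<^esub> enc (pi t)) [^]\<^bsub>Gn\<^esub> ord (s \<otimes> t) = \<one>\<^bsub>Gn\<^esub>" using rel by blast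
  show ?thesis by (rule U[rule_format, OF group_Gn A B])
qed

definition hh where "hh = (SOME h. h \<in> hom W Gn \<and> (\<forall>s\<in>S. h s = enc (pi s)))"

lemma hh: "hh \<in> hom W Gn" "s \<in> S \<Longrightarrow> hh s = enc (pi s)"
  using someI_ex[OF hom_exists[unfolded Bex_def]] by (auto simp: hh_def)

definition phi where "phi w = dec (hh w)"

lemma phi_G0: "w \<in> carrier W \<Longrightarrow> phi w \<in> G0"
  using hom_carrier[OF hh(1)] by (auto simp: phi_def Gn_simps)

lemma phi_mult: "x \<in> carrier W \<Longrightarrow> y \<in> carrier W \<Longrightarrow> phi (x \<otimes> y) = phi x \<circ> phi y"
proof -
  assume xy: "x \<in> carrier W" "y \<in> carrier W"
  have "hh x \<in> enc ` G0" "hh y \<in> enc ` G0" using hom_carrier[OF hh(1)] xy by (auto simp: Gn_simps)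
  then obtain f g where "f \<in> G0" "hh x = enc f" "g \<in> G0" "hh y = enc g" by blast
  then show ?thesis using hom_mult[OF hh(1) xy] by (simp add: phi_def Gn_simps G0_comp)
qed

lemma phi_S: "s \<in> S \<Longrightarrow> phi s = pi s"
  by (simp add: phi_def hh pi_G0)

lemma phi_one: "phi \<one> = id"
proof -
  have "phi (\<one> \<otimes> \<one>) = phi \<one> \<circ> phi \<one>" by (rule phi_mult) simp_all
  then have "phi \<one> = phi \<one> \<circ> phi \<one>" by (metis l_one one_closed)
  moreover obtain g where "g \<in> G0" "g \<circ> phi \<one> = id" using G0_inv[OF phi_G0[of \<one>]] by auto
  ultimately show ?thesis by (metis comp_assoc id_comp)
qed

definition Inv where "Inv w = {r \<in> carrier W. snd (phi w (r, False))}"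

lemma phi_form_aux:
  "set as \<subseteq> S \<Longrightarrow> r \<in> carrier W \<Longrightarrow>
   phi (wprod W as) (r, e) = (wprod W as \<otimes> r \<otimes> inv (wprod W as), e \<noteq> (r \<in> Inv (wprod W as)))"
proof (induct as arbitrary: r e)
  case Nil then show ?case by (simp add: phi_one Inv_def)
next
  case (Cons a as)
  define y where "y = wprod W as"
  have ac: "a \<in> carrier W" "a \<otimes> a = \<one>" using Cons SW Sinv by auto
  have yc: "y \<in> carrier W" using Cons SW by (auto simp: y_def)
  have IH: "phi y (r, e) = (y \<otimes> r \<otimes> inv y, e \<noteq> (r \<in> Inv y))" for e
    using Cons by (simp add: y_def)
  have rc: "r \<in> carrier W" by fact
  have P: "phi (a \<otimes> y) (r, e) = (a \<otimes> (y \<otimes> r \<otimes> inv y) \<otimes> a, (e \<noteq> (r \<in> Inv y)) \<noteq> (y \<otimes> r \<otimes> inv y = a))" for e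
    using Cons(2) phi_mult[OF ac(1) yc] phi_S[of a] IH yc rc ac by (simp add: pi_def)
  have I: "(r \<in> Inv (a \<otimes> y)) = ((r \<in> Inv y) \<noteq> (y \<otimes> r \<otimes> inv y = a))"
    using P[of False] rc by (simp add: Inv_def)
  have F: "(a \<otimes> y) \<otimes> r \<otimes> inv (a \<otimes> y) = a \<otimes> (y \<otimes> r \<otimes> inv y) \<otimes> a"
  proof -
    have "inv (a \<otimes> y) = inv y \<otimes> a" using ac yc by (simp add: inv_mult_group inv_invol)
    then show ?thesis using ac(1) yc rc by (simp add: m_assoc)
  qed
  have G: "wprod W (a # as) = a \<otimes> y" by (simp add: y_def)
  show ?case unfolding G P F I by blast
qed

lemma phi_form: "w \<in> carrier W \<Longrightarrow> r \<in> carrier W \<Longrightarrow> phi w (r, e) = (w \<otimes> r \<otimes> inv w, e \<noteq> (r \<in> Inv w))"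
proof -
  assume w: "w \<in> carrier W" and r: "r \<in> carrier W"
  obtain as where as: "set as \<subseteq> S" "w = wprod W as" using w carrier_wprod by auto
  show ?thesis unfolding as(2) by (rule phi_form_aux[OF as(1) r])
qed

lemma Inv_sub: "Inv w \<subseteq> carrier W" by (auto simp: Inv_def)

lemma Inv_mult: "x \<in> carrier W \<Longrightarrow> y \<in> carrier W \<Longrightarrow> r \<in> carrier W \<Longrightarrow>
   (r \<in> Inv (x \<otimes> y)) = ((r \<in> Inv y) \<noteq> (y \<otimes> r \<otimes> inv y \<in> Inv x))"
proof -
  assume xyr: "x \<in> carrier W" "y \<in> carrier W" "r \<in> carrier W"
  have "phi (x \<otimes> y) (r, False) = phi x (phi y (r, False))" using phi_mult xyr by simp
  also have "\<dots> = phi x (y \<otimes> r \<otimes> inv y, r \<in> Inv y)" using phi_form xyr by simp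
  also have "\<dots> = (x \<otimes> (y \<otimes> r \<otimes> inv y) \<otimes> inv x, (r \<in> Inv y) \<noteq> (y \<otimes> r \<otimes> inv y \<in> Inv x))"
    using phi_form xyr by simp
  finally have "snd (phi (x \<otimes> y) (r, False)) = ((r \<in> Inv y) \<noteq> (y \<otimes> r \<otimes> inv y \<in> Inv x))"
    by (simp only: snd_conv)
  moreover have "(r \<in> Inv (x \<otimes> y)) = snd (phi (x \<otimes> y) (r, False))"
    using xyr(3) unfolding Inv_def by blast
  ultimately show ?thesis by (simp only:)
qed

lemma Inv_one: "Inv \<one> = {}" by (simp add: Inv_def phi_one)

lemma Inv_S: "s \<in> S \<Longrightarrow> Inv s = {s}"
  using SW by (auto simp: Inv_def phi_S pi_def)

end



context cox begin

lemma inv_cancel_l[simp]: "u \<in> carrier W \<Longrightarrow> x \<in> carrier W \<Longrightarrow> inv u \<otimes> (u \<otimes> x) = x"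
  by (simp add: m_assoc[symmetric])
lemma inv_cancel_l2[simp]: "u \<in> carrier W \<Longrightarrow> x \<in> carrier W \<Longrightarrow> u \<otimes> (inv u \<otimes> x) = x"
  by (simp add: m_assoc[symmetric])

abbreviation len where "len \<equiv> cox_length W S"

lemma len_def': "len w = (LEAST n. \<exists>ws. length ws = n \<and> set ws \<subseteq> S \<and> wprod W ws = w)"
  by (simp add: cox_length_def wprod_def)

lemma len_word: "w \<in> carrier W \<Longrightarrow> \<exists>ws. length ws = len w \<and> set ws \<subseteq> S \<and> wprod W ws = w"
proof -
  assume "w \<in> carrier W"
  then obtain as where "set as \<subseteq> S" "wprod W as = w" using carrier_wprod by auto
  then have "\<exists>n ws. length ws = n \<and> set ws \<subseteq> S \<and> wprod W ws = w" by blast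
  then show ?thesis unfolding len_def' by (rule LeastI_ex)
qed

lemma len_le: "set ws \<subseteq> S \<Longrightarrow> len (wprod W ws) \<le> length ws"
  unfolding len_def' by (rule Least_le) blast

lemma len_one: "len \<one> = 0"
  using len_le[of "[]"] by simp

lemma len_zero: "w \<in> carrier W \<Longrightarrow> len w = 0 \<Longrightarrow> w = \<one>"
  using len_word by fastforce

lemma len_S: "s \<in> S \<Longrightarrow> len s = 1"
proof -
  assume s: "s \<in> S"
  have "len (wprod W [s]) \<le> 1" using len_le[of "[s]"] s by simp
  moreover have "wprod W [s] = s" using s SW' by simp
  moreover have "len s \<noteq> 0" using len_zero[of s] Sne[OF s] SW' s by auto
  ultimately show ?thesis by simp
qed

lemma len_mult_S: "s \<in> S \<Longrightarrow> w \<in> carrier W \<Longrightarrow> len (s \<otimes> w) \<le> len w + 1"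
proof -
  assume s: "s \<in> S" and w: "w \<in> carrier W"
  obtain ws where ws: "length ws = len w" "set ws \<subseteq> S" "wprod W ws = w" using len_word[OF w] by blast
  show ?thesis using len_le[of "s#ws"] ws s by simp
qed

lemma len_dec: "w \<in> carrier W \<Longrightarrow> w \<noteq> \<one> \<Longrightarrow> \<exists>s\<in>S. \<exists>w'\<in>carrier W. w = s \<otimes> w' \<and> len w = len w' + 1"
proof -
  assume w: "w \<in> carrier W" "w \<noteq> \<one>"
  obtain ws where ws: "length ws = len w" "set ws \<subseteq> S" "wprod W ws = w" using len_word[OF w(1)] by blast
  then obtain s ws' where sw: "ws = s # ws'" using w(2) by (cases ws) auto
  define w' where "w' = wprod W ws'"
  have s: "s \<in> S" and ws': "set ws' \<subseteq> S" using ws sw by auto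
  have w'c: "w' \<in> carrier W" using ws' SW by (auto simp: w'_def)
  have e: "w = s \<otimes> w'" using ws sw by (simp add: w'_def)
  have "len w' \<le> length ws'" using len_le[OF ws'] by (simp add: w'_def)
  moreover have "len w \<le> len w' + 1" using len_mult_S[OF s w'c] e by simp
  ultimately have "len w = len w' + 1" using ws sw by simp
  then show ?thesis using s w'c e by blast
qed

lemma len_inv_le: "w \<in> carrier W \<Longrightarrow> len (inv w) \<le> len w"
proof -
  assume w: "w \<in> carrier W"
  obtain ws where ws: "length ws = len w" "set ws \<subseteq> S" "wprod W ws = w" using len_word[OF w] by blast
  have "inv w = wprod W (rev ws)" using wprod_rev[of ws] ws SW Sinv by auto
  then show ?thesis using len_le[of "rev ws"] ws by simp
qed

lemma len_inv: "w \<in> carrier W \<Longrightarrow> len (inv w) = len w"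
  using len_inv_le[of w] len_inv_le[of "inv w"] by simp

lemma Inv_main: "w \<in> carrier W \<Longrightarrow> finite (Inv w) \<and> card (Inv w) = len w \<and> (\<forall>t\<in>Inv w. len (w \<otimes> t) < len w)"
proof (induct "len w" arbitrary: w rule: less_induct)
  case less
  show ?case
  proof (cases "w = \<one>")
    case True then show ?thesis by (simp add: Inv_one len_one)
  next
    case False
    obtain s w' where s: "s \<in> S" and w'c: "w' \<in> carrier W" and e: "w = s \<otimes> w'" and l: "len w = len w' + 1"
      using len_dec[OF less(2) False] by blast
    have sc: "s \<in> carrier W" using s SW by auto
    have IH: "finite (Inv w') \<and> card (Inv w') = len w' \<and> (\<forall>t\<in>Inv w'. len (w' \<otimes> t) < len w')"
      using less(1)[of w'] l w'c by simp
    define c where "c = inv w' \<otimes> s \<otimes> w'"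
    have cc: "c \<in> carrier W" using sc w'c by (simp add: c_def)
    have w'c_eq: "w' \<otimes> c = w" using sc w'c by (simp add: c_def e m_assoc[symmetric])
    have wc_eq: "w \<otimes> c = w'"
    proof -
      have "w \<otimes> c = s \<otimes> (w' \<otimes> c)" using sc w'c cc by (simp add: e m_assoc)
      also have "\<dots> = w'" using w'c_eq e sc w'c invol_cancel[OF sc Sinv[OF s]] by simp
      finally show ?thesis .
    qed
    have mem: "(r \<in> Inv w) = ((r \<in> Inv w') \<noteq> (r = c))" if r: "r \<in> carrier W" for r
    proof -
      have "(r \<in> Inv w) = ((r \<in> Inv w') \<noteq> (w' \<otimes> r \<otimes> inv w' \<in> Inv s))"
        unfolding e by (rule Inv_mult[OF sc w'c r])
      also have "(w' \<otimes> r \<otimes> inv w' \<in> Inv s) = (r = c)"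
        using conj_iff[of w' "inv w'" r s] w'c r sc by (simp add: Inv_S[OF s] c_def)
      finally show ?thesis .
    qed
    have cnot: "c \<notin> Inv w'"
    proof
      assume "c \<in> Inv w'"
      then have "len (w' \<otimes> c) < len w'" using IH by blast
      then show False using w'c_eq l by simp
    qed
    have Iw: "Inv w = insert c (Inv w')"
      using mem cc Inv_sub[of w] Inv_sub[of w'] cnot by blast
    have fin: "finite (Inv w)" using IH Iw by simp
    have card: "card (Inv w) = len w" using IH Iw cnot l by simp
    have desc: "\<forall>t\<in>Inv w. len (w \<otimes> t) < len w"
    proof
      fix t assume t: "t \<in> Inv w"
      show "len (w \<otimes> t) < len w"
      proof (cases "t = c")
        case True then show ?thesis using wc_eq l by simp
      next
        case False
        then have t': "t \<in> Inv w'" using t Iw by blast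
        have tc: "t \<in> carrier W" using t Inv_sub by blast
        have "len (w \<otimes> t) = len (s \<otimes> (w' \<otimes> t))" using sc w'c tc by (simp add: e m_assoc)
        also have "\<dots> \<le> len (w' \<otimes> t) + 1" using len_mult_S[OF s] w'c tc by simp
        finally show ?thesis using IH t' l by fastforce
      qed
    qed
    show ?thesis using fin card desc by blast
  qed
qed

lemma card_Inv: "w \<in> carrier W \<Longrightarrow> card (Inv w) = len w" using Inv_main by blast
lemma finite_Inv: "w \<in> carrier W \<Longrightarrow> finite (Inv w)" using Inv_main by blast
lemma Inv_desc: "w \<in> carrier W \<Longrightarrow> t \<in> Inv w \<Longrightarrow> len (w \<otimes> t) < len w" using Inv_main by blast

lemma Inv_inv: "x \<in> carrier W \<Longrightarrow> r \<in> carrier W \<Longrightarrow> (r \<in> Inv (inv x)) = (inv x \<otimes> r \<otimes> x \<in> Inv x)"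
  using Inv_mult[of x "inv x" r] by (simp add: Inv_one)

lemma Inv_inj: "x \<in> carrier W \<Longrightarrow> y \<in> carrier W \<Longrightarrow> Inv x = Inv y \<Longrightarrow> x = y"
proof -
  assume xy: "x \<in> carrier W" "y \<in> carrier W" "Inv x = Inv y"
  have "r \<notin> Inv (y \<otimes> inv x)" if r: "r \<in> carrier W" for r
  proof -
    have e1: "(r \<in> Inv (y \<otimes> inv x)) = ((r \<in> Inv (inv x)) \<noteq> (inv x \<otimes> r \<otimes> inv (inv x) \<in> Inv y))"
      by (rule Inv_mult) (use xy r in simp_all)
    have e2: "(r \<in> Inv (inv x)) = (inv x \<otimes> r \<otimes> x \<in> Inv x)" by (rule Inv_inv[OF xy(1) r])
    have ii: "inv (inv x) = x" using xy by simp
    show ?thesis by (simp only: e1 e2 ii xy(3))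
  qed
  then have "Inv (y \<otimes> inv x) = {}" using Inv_sub by blast
  then have "len (y \<otimes> inv x) = 0" using card_Inv[of "y \<otimes> inv x"] xy by simp
  then have "y \<otimes> inv x = \<one>" using len_zero xy by simp
  then have "inv (inv x) = y" using xy by (intro inv_equality) simp_all
  then show ?thesis using xy by simp
qed

definition refl :: "'w \<Rightarrow> bool" where
  "refl t \<longleftrightarrow> (\<exists>u\<in>carrier W. \<exists>s\<in>S. t = u \<otimes> s \<otimes> inv u)"

lemma refl_carrier: "refl t \<Longrightarrow> t \<in> carrier W"
  using SW by (auto simp: refl_def)

lemma refl_invol: "refl t \<Longrightarrow> t \<otimes> t = \<one>"
proof -
  assume "refl t"
  then obtain u s where u: "u \<in> carrier W" and s: "s \<in> S" and t: "t = u \<otimes> s \<otimes> inv u"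
    by (auto simp: refl_def)
  have sc: "s \<in> carrier W" using s SW by auto
  have "t \<otimes> t = u \<otimes> (s \<otimes> (inv u \<otimes> u) \<otimes> s) \<otimes> inv u" using u sc by (simp add: t m_assoc)
  also have "\<dots> = \<one>" using u sc Sinv[OF s] by simp
  finally show ?thesis .
qed

lemma refl_self: "refl t \<Longrightarrow> t \<in> Inv t"
proof -
  assume "refl t"
  then obtain u s where u: "u \<in> carrier W" and s: "s \<in> S" and t: "t = u \<otimes> s \<otimes> inv u"
    by (auto simp: refl_def)
  have sc: "s \<in> carrier W" using s SW by auto
  define y where "y = s \<otimes> inv u"
  have yc: "y \<in> carrier W" using u sc by (simp add: y_def)
  have tc: "t \<in> carrier W" using u sc by (simp add: t)
  have ty: "t = u \<otimes> y" using u sc by (simp add: t y_def m_assoc)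
  have invy: "inv y = u \<otimes> s" using u sc by (simp add: y_def inv_mult_group inv_invol Sinv[OF s])
  have c1: "y \<otimes> t \<otimes> inv y = s"
  proof -
    have "y \<otimes> t \<otimes> inv y = s \<otimes> (inv u \<otimes> u) \<otimes> s \<otimes> (inv u \<otimes> u) \<otimes> s"
      using u sc Sinv[OF s] by (simp add: y_def t invy m_assoc)
    also have "\<dots> = s" using u sc Sinv[OF s] by (simp add: m_assoc)
    finally show ?thesis .
  qed
  have c2: "inv u \<otimes> t \<otimes> u = s"
  proof -
    have "inv u \<otimes> t \<otimes> u = (inv u \<otimes> u) \<otimes> s \<otimes> (inv u \<otimes> u)" using u sc by (simp add: t m_assoc)
    also have "\<dots> = s" using u sc by simp
    finally show ?thesis .
  qed
  have "(t \<in> Inv t) = ((t \<in> Inv y) \<noteq> (y \<otimes> t \<otimes> inv y \<in> Inv u))"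
    using Inv_mult[OF u yc tc] ty by simp
  also have "(t \<in> Inv y) = ((t \<in> Inv (inv u)) \<noteq> (inv u \<otimes> t \<otimes> inv (inv u) \<in> Inv s))"
    using Inv_mult[of s "inv u" t] u sc tc by (simp add: y_def)
  also have "(t \<in> Inv (inv u)) = (s \<in> Inv u)" using Inv_inv[OF u tc] c2 by simp
  also have "(inv u \<otimes> t \<otimes> inv (inv u) \<in> Inv s) = True" using c2 u Inv_S[OF s] by simp
  finally show ?thesis using c1 by simp
qed

lemma refl_asc: "w \<in> carrier W \<Longrightarrow> refl t \<Longrightarrow> t \<notin> Inv w \<Longrightarrow> len w < len (w \<otimes> t)"
proof -
  assume w: "w \<in> carrier W" and t: "refl t" and n: "t \<notin> Inv w"
  have tc: "t \<in> carrier W" using refl_carrier[OF t] .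
  have it: "inv t = t" using inv_invol[OF tc refl_invol[OF t]] .
  have "t \<otimes> t \<otimes> inv t = t" using tc refl_invol[OF t] it by simp
  then have "t \<in> Inv (w \<otimes> t)" using Inv_mult[OF w tc tc] refl_self[OF t] n by simp
  then have "len (w \<otimes> t \<otimes> t) < len (w \<otimes> t)" using Inv_desc w tc by simp
  moreover have "w \<otimes> t \<otimes> t = w" using w tc refl_invol[OF t] by (simp add: m_assoc)
  ultimately show ?thesis by simp
qed

lemma exchange:
  "set bs \<subseteq> S \<Longrightarrow> length bs = len (wprod W bs) \<Longrightarrow> t \<in> Inv (wprod W bs) \<Longrightarrow>
   \<exists>i<length bs. wprod W bs \<otimes> t = wprod W (take i bs @ drop (Suc i) bs)"
proof (induct bs)
  case Nil then show ?case by (simp add: Inv_one)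
next
  case (Cons b bs)
  define y where "y = wprod W bs"
  have b: "b \<in> S" and bs: "set bs \<subseteq> S" using Cons by auto
  have bc: "b \<in> carrier W" using b SW by auto
  have yc: "y \<in> carrier W" using bs SW by (auto simp: y_def)
  have tc: "t \<in> carrier W" using Cons(4) Inv_sub by blast
  have "len (b \<otimes> y) \<le> len y + 1" using len_mult_S[OF b yc] .
  moreover have "len y \<le> length bs" using len_le[OF bs] by (simp add: y_def)
  ultimately have lb: "length bs = len y" using Cons(3) by (simp add: y_def)
  have "(t \<in> Inv (b \<otimes> y)) = ((t \<in> Inv y) \<noteq> (y \<otimes> t \<otimes> inv y \<in> Inv b))" by (rule Inv_mult[OF bc yc tc])
  then have cases: "t \<in> Inv y \<or> y \<otimes> t \<otimes> inv y = b" using Cons(4) Inv_S[OF b] by (auto simp: y_def)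
  show ?case
  proof (cases "y \<otimes> t \<otimes> inv y = b")
    case True
    then have "y \<otimes> t = b \<otimes> y" using yc tc bc by (metis inv_solve_right m_closed)
    then have "b \<otimes> y \<otimes> t = y" using bc yc tc invol_cancel[OF bc Sinv[OF b]] by (simp add: m_assoc)
    then show ?thesis by (auto simp: y_def intro!: exI[of _ 0])
  next
    case False
    then have "t \<in> Inv y" using cases by blast
    then obtain i where i: "i < length bs" "y \<otimes> t = wprod W (take i bs @ drop (Suc i) bs)"
      using Cons(1)[OF bs] lb by (auto simp: y_def)
    have "wprod W (b # bs) \<otimes> t = b \<otimes> (y \<otimes> t)" using bc yc tc by (simp add: y_def m_assoc)
    also have "\<dots> = wprod W (take (Suc i) (b#bs) @ drop (Suc (Suc i)) (b#bs))" using i by simp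
    finally show ?thesis using i by (intro exI[of _ "Suc i"]) simp
  qed
qed

lemma reduced_word:
  assumes I: "I \<subseteq> S"
  shows "set bs \<subseteq> I \<Longrightarrow> \<exists>as. set as \<subseteq> I \<and> wprod W as = wprod W bs \<and> length as = len (wprod W bs)"
proof (induct bs)
  case Nil then show ?case by (auto simp: len_one)
next
  case (Cons b bs)
  define y where "y = wprod W bs"
  have b: "b \<in> S" and bI: "b \<in> I" and bs: "set bs \<subseteq> I" using Cons I by auto
  have bc: "b \<in> carrier W" using b SW by auto
  have yc: "y \<in> carrier W" using bs I SW by (auto simp: y_def)
  obtain as where as: "set as \<subseteq> I" "wprod W as = y" "length as = len y" using Cons(1)[OF bs] by (auto simp: y_def)
  have asS: "set as \<subseteq> S" using as I by auto
  define t where "t = inv y \<otimes> b \<otimes> y"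
  have tr: "refl t" unfolding refl_def t_def using yc b by (intro bexI[of _ "inv y"] bexI[of _ b]) simp_all
  have tc: "t \<in> carrier W" using refl_carrier[OF tr] .
  have yt: "y \<otimes> t = b \<otimes> y" using yc bc by (simp add: t_def m_assoc[symmetric])
  have up: "len (b \<otimes> y) \<le> len y + 1" by (rule len_mult_S[OF b yc])
  have down: "len y \<le> len (b \<otimes> y) + 1"
    using len_mult_S[OF b, of "b \<otimes> y"] bc yc invol_cancel[OF bc Sinv[OF b]] by (simp add: m_assoc)
  show ?case
  proof (cases "t \<in> Inv y")
    case True
    obtain i where i: "i < length as" "y \<otimes> t = wprod W (take i as @ drop (Suc i) as)"
      using exchange[OF asS] as True by auto
    define cs where "cs = take i as @ drop (Suc i) as"
    have csI: "set cs \<subseteq> I" using as(1) set_take_subset set_drop_subset by (fastforce simp: cs_def)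
    have lcs: "length cs = len y - 1" using i as by (simp add: cs_def)
    have "len (b \<otimes> y) \<le> length cs" using len_le[of cs] csI I i(2) yt by (auto simp: cs_def)
    then have "len (b \<otimes> y) = length cs" using down lcs by simp
    then show ?thesis using csI i yt by (intro exI[of _ cs]) (simp add: cs_def y_def)
  next
    case False
    have "len y < len (b \<otimes> y)" using refl_asc[OF yc tr False] yt by simp
    then have "len (b \<otimes> y) = len y + 1" using up by simp
    then show ?thesis using as bI by (intro exI[of _ "b # as"]) (simp add: y_def)
  qed
qed

end



context cox begin

lemma WI_sub: "I \<subseteq> S \<Longrightarrow> generate W I \<subseteq> carrier W"
  using generate_is_subgroup[of I] SW subgroup.subset by blast

lemma WI_sg: "I \<subseteq> S \<Longrightarrow> subgroup (generate W I) W"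
  using generate_is_subgroup[of I] SW by blast

lemma WI_wprod: "I \<subseteq> S \<Longrightarrow> generate W I = {wprod W as | as. set as \<subseteq> I}"
  using generate_wprod[of I] SW Sinv by blast

definition TI where "TI I = {u \<otimes> s \<otimes> inv u | u s. u \<in> generate W I \<and> s \<in> I}"

lemma TI_refl: "I \<subseteq> S \<Longrightarrow> x \<in> TI I \<Longrightarrow> refl x \<and> x \<in> generate W I"
proof -
  assume I: "I \<subseteq> S" and x: "x \<in> TI I"
  then obtain u s where us: "u \<in> generate W I" "s \<in> I" "x = u \<otimes> s \<otimes> inv u" by (auto simp: TI_def)
  have "u \<in> carrier W" using us WI_sub[OF I] by auto
  then have "refl x" using us I by (auto simp: refl_def)
  moreover have "x \<in> generate W I"
    using us WI_sg[OF I] by (auto intro: subgroup.m_closed subgroup.m_inv_closed generate.incl)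
  ultimately show ?thesis ..
qed

lemma TI_conj: "I \<subseteq> S \<Longrightarrow> v \<in> generate W I \<Longrightarrow> x \<in> TI I \<Longrightarrow> v \<otimes> x \<otimes> inv v \<in> TI I"
proof -
  assume I: "I \<subseteq> S" and v: "v \<in> generate W I" and x: "x \<in> TI I"
  then obtain u s where us: "u \<in> generate W I" "s \<in> I" "x = u \<otimes> s \<otimes> inv u" by (auto simp: TI_def)
  have uc: "u \<in> carrier W" and vc: "v \<in> carrier W" using us v WI_sub[OF I] by auto
  have sc: "s \<in> carrier W" using us I SW by auto
  have "v \<otimes> x \<otimes> inv v = (v \<otimes> u) \<otimes> s \<otimes> inv (v \<otimes> u)"
    using uc vc sc by (simp add: us inv_mult_group m_assoc)
  moreover have "v \<otimes> u \<in> generate W I" using v us WI_sg[OF I] by (auto intro: subgroup.m_closed)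
  ultimately show ?thesis using us by (auto simp: TI_def)
qed

lemma TI_conj_iff: "I \<subseteq> S \<Longrightarrow> v \<in> generate W I \<Longrightarrow> x \<in> carrier W \<Longrightarrow> (v \<otimes> x \<otimes> inv v \<in> TI I) = (x \<in> TI I)"
proof
  assume I: "I \<subseteq> S" and v: "v \<in> generate W I" and x: "x \<in> carrier W" and h: "v \<otimes> x \<otimes> inv v \<in> TI I"
  have vc: "v \<in> carrier W" using v WI_sub[OF I] by auto
  have iv: "inv v \<in> generate W I" using v WI_sg[OF I] by (auto intro: subgroup.m_inv_closed)
  have "inv v \<otimes> (v \<otimes> x \<otimes> inv v) \<otimes> inv (inv v) \<in> TI I" by (rule TI_conj[OF I iv h])
  then show "x \<in> TI I" using vc x by (simp add: m_assoc)
qed (rule TI_conj)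

lemma Inv_WI: "I \<subseteq> S \<Longrightarrow> u \<in> generate W I \<Longrightarrow> Inv u \<subseteq> TI I"
proof -
  assume I: "I \<subseteq> S" and u: "u \<in> generate W I"
  obtain as where as: "set as \<subseteq> I" "u = wprod W as" using u WI_wprod[OF I] by auto
  have "Inv (wprod W as) \<subseteq> TI I" using as(1)
  proof (induct as)
    case Nil then show ?case by (simp add: Inv_one)
  next
    case (Cons a as)
    define y where "y = wprod W as"
    have a: "a \<in> S" "a \<in> I" and asI: "set as \<subseteq> I" using Cons I by auto
    have ac: "a \<in> carrier W" using a SW by auto
    have yI: "y \<in> generate W I" using asI WI_wprod[OF I] by (auto simp: y_def)
    have yc: "y \<in> carrier W" using yI WI_sub[OF I] by auto
    show ?case
    proof
      fix r assume r: "r \<in> Inv (wprod W (a # as))"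
      have rc: "r \<in> carrier W" using r Inv_sub by blast
      have "(r \<in> Inv (a \<otimes> y)) = ((r \<in> Inv y) \<noteq> (y \<otimes> r \<otimes> inv y \<in> Inv a))" by (rule Inv_mult[OF ac yc rc])
      then have "r \<in> Inv y \<or> y \<otimes> r \<otimes> inv y = a" using r Inv_S[OF a(1)] by (auto simp: y_def)
      then show "r \<in> TI I"
      proof
        assume "r \<in> Inv y" then show ?thesis using Cons(1)[OF asI] by (auto simp: y_def)
      next
        assume "y \<otimes> r \<otimes> inv y = a"
        then have "r = inv y \<otimes> a \<otimes> y" using conj_iff[of y "inv y" r a] yc rc ac by simp
        moreover have "inv y \<in> generate W I" using yI WI_sg[OF I] by (auto intro: subgroup.m_inv_closed)
        ultimately show ?thesis using a yc unfolding TI_def by (intro CollectI exI[of _ "inv y"] exI[of _ a]) simp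
      qed
    qed
  qed
  then show ?thesis using as by simp
qed

lemma max_Inv: "I \<subseteq> S \<Longrightarrow> w \<in> generate W I \<Longrightarrow> (\<forall>v\<in>generate W I. len v \<le> len w) \<Longrightarrow> Inv w = TI I"
proof
  assume I: "I \<subseteq> S" and w: "w \<in> generate W I" and mx: "\<forall>v\<in>generate W I. len v \<le> len w"
  show "Inv w \<subseteq> TI I" by (rule Inv_WI[OF I w])
  show "TI I \<subseteq> Inv w"
  proof
    fix t assume t: "t \<in> TI I"
    show "t \<in> Inv w"
    proof (rule ccontr)
      assume n: "t \<notin> Inv w"
      have wc: "w \<in> carrier W" using w WI_sub[OF I] by auto
      have "len w < len (w \<otimes> t)" using refl_asc[OF wc _ n] TI_refl[OF I t] by blast
      moreover have "w \<otimes> t \<in> generate W I" using w TI_refl[OF I t] WI_sg[OF I] by (auto intro: subgroup.m_closed)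
      ultimately show False using mx by fastforce
    qed
  qed
qed

lemma longest_prop:
  assumes I: "I \<subseteq> S" and fin: "finite (generate W I)"
  shows "longest W S I \<in> generate W I \<and> (\<forall>v\<in>generate W I. len v \<le> len (longest W S I))"
proof -
  have ne: "len ` generate W I \<noteq> {}" using generate.one by blast
  have "Max (len ` generate W I) \<in> len ` generate W I" using Max_in[OF finite_imageI[OF fin] ne] .
  then obtain w where w: "w \<in> generate W I" "len w = Max (len ` generate W I)" by auto
  have mx: "\<forall>v\<in>generate W I. len v \<le> len w" using w fin by simp
  have "longest W S I = w" unfolding longest_def
  proof (rule the_equality)
    show "w \<in> generate W I \<and> (\<forall>v\<in>generate W I. len v \<le> len w)" using w mx by blast
  next
    fix w' assume w': "w' \<in> generate W I \<and> (\<forall>v\<in>generate W I. len v \<le> len w')"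
    have "Inv w' = Inv w" using max_Inv[OF I] w' w mx by simp
    then show "w' = w" using Inv_inj w' w WI_sub[OF I] by blast
  qed
  then show ?thesis using w mx by simp
qed

lemma longest_unique:
  assumes I: "I \<subseteq> S" and fin: "finite (generate W I)"
    and w: "w \<in> generate W I" "\<forall>v\<in>generate W I. len v \<le> len w"
  shows "w = longest W S I"
proof -
  note L = longest_prop[OF I fin]
  have "Inv w = Inv (longest W S I)" using max_Inv[OF I] w L by simp
  then show ?thesis using Inv_inj w L WI_sub[OF I] by blast
qed

lemma longest_carrier: "I \<subseteq> S \<Longrightarrow> finite (generate W I) \<Longrightarrow> longest W S I \<in> carrier W"
  using longest_prop WI_sub by blast

lemma longest_invol:
  assumes I: "I \<subseteq> S" and fin: "finite (generate W I)"
  shows "longest W S I \<otimes> longest W S I = \<one>"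
proof -
  define w where "w = longest W S I"
  note L = longest_prop[OF I fin, folded w_def]
  have wc: "w \<in> carrier W" using L WI_sub[OF I] by auto
  have "inv w \<in> generate W I" using L WI_sg[OF I] by (auto intro: subgroup.m_inv_closed)
  moreover have "\<forall>v\<in>generate W I. len v \<le> len (inv w)" using L len_inv[OF wc] by simp
  ultimately have "inv w = w" using longest_unique[OF I fin] w_def by blast
  then show ?thesis using wc by (metis r_inv w_def)
qed

lemma longest_conj:
  assumes I: "I \<subseteq> S" and fin: "finite (generate W I)" and s: "s \<in> I"
  shows "longest W S I \<otimes> s \<otimes> longest W S I \<in> I"
proof -
  define w where "w = longest W S I"
  note L = longest_prop[OF I fin, folded w_def]
  have wc: "w \<in> carrier W" using L WI_sub[OF I] by auto
  have ww: "w \<otimes> w = \<one>" using longest_invol[OF I fin] w_def by simp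
  have iw: "inv w = w" using inv_invol[OF wc ww] .
  have sS: "s \<in> S" using s I by auto
  have sc: "s \<in> carrier W" using sS SW by auto
  define r where "r = w \<otimes> s \<otimes> w"
  have rc: "r \<in> carrier W" using wc sc by (simp add: r_def)
  have rI: "r \<in> generate W I"
    using L s WI_sg[OF I] by (auto simp: r_def intro: subgroup.m_closed generate.incl)
  have IW: "Inv w = TI I" using max_Inv[OF I] L by blast
  have rTI: "r \<in> TI I" unfolding TI_def r_def using L s iw by (intro CollectI exI[of _ w] exI[of _ s]) simp
  have wr: "w \<otimes> r = s \<otimes> w" using wc sc ww by (simp add: r_def m_assoc[symmetric])
  have key: "(x \<in> Inv r) = (x = r)" if x: "x \<in> carrier W" for x
  proof -
    have e1: "(x \<in> Inv (w \<otimes> r)) = ((x \<in> Inv r) \<noteq> (r \<otimes> x \<otimes> inv r \<in> TI I))"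
      using Inv_mult[OF wc rc x] IW by simp
    have e1': "(r \<otimes> x \<otimes> inv r \<in> TI I) = (x \<in> TI I)" by (rule TI_conj_iff[OF I rI x])
    have e2: "(x \<in> Inv (s \<otimes> w)) = ((x \<in> TI I) \<noteq> (w \<otimes> x \<otimes> inv w \<in> Inv s))"
      using Inv_mult[OF sc wc x] IW by simp
    have e2': "(w \<otimes> x \<otimes> inv w \<in> Inv s) = (x = r)"
      using conj_iff[of w w x s] wc x sc ww iw Inv_S[OF sS] by (simp add: r_def)
    show ?thesis using e1 e1' e2 e2' wr by auto
  qed
  have "Inv r = {r}" using key rc Inv_sub[of r] by blast
  then have l1: "len r = 1" using card_Inv[OF rc] by simp
  obtain bs where bs: "set bs \<subseteq> I" "r = wprod W bs" using rI WI_wprod[OF I] by auto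
  obtain as where as: "set as \<subseteq> I" "wprod W as = r" "length as = 1"
    using reduced_word[OF I bs(1)] bs l1 by auto
  then obtain a where "as = [a]" by (cases as) auto
  then show ?thesis using as I SW by (auto simp: w_def[symmetric] r_def[symmetric])
qed

end



lemma sum_apply: "(sum f A) x = (\<Sum>a\<in>A. f a x)"
  by (induct A rule: infinite_finite_induct) auto

interpretation vm: Modules.module "\<lambda>(c::real) (v::'a \<Rightarrow> real) J. c * v J"
  by unfold_locales (auto simp: fun_eq_iff algebra_simps)

lemma vspan_eq: "vspan X = vm.span X"
  by (simp add: vspan_def)

context cox begin

lemma conn_props: "I \<in> conn W S \<Longrightarrow> I \<noteq> {} \<and> I \<subseteq> S \<and> finite (generate W I)"
  by (simp add: conn_def connected_subset_def)

lemma finite_conn: "finite (conn W S)"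
proof -
  have "conn W S \<subseteq> Pow S" by (auto simp: conn_def connected_subset_def)
  then show ?thesis using finS finite_subset by blast
qed

lemma cj_facts:
  assumes I: "I \<in> conn W S"
  shows "longest W S I \<in> carrier W" "longest W S I \<otimes> longest W S I = \<one>"
        "\<And>s. s \<in> I \<Longrightarrow> longest W S I \<otimes> s \<otimes> longest W S I \<in> I"
  using conn_props[OF I] longest_carrier longest_invol longest_conj by auto

lemma conj_set_conj_set:
  assumes I: "I \<in> conn W S" and J: "J \<subseteq> I"
  shows "conj_set W S I (conj_set W S I J) = J"
proof -
  define w where "w = longest W S I"
  have wc: "w \<in> carrier W" and ww: "w \<otimes> w = \<one>" using cj_facts[OF I] by (auto simp: w_def)
  have JW: "J \<subseteq> carrier W" using J conn_props[OF I] SW by auto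
  have "w \<otimes> (w \<otimes> s \<otimes> w) \<otimes> w = s" if "s \<in> carrier W" for s
    using that wc ww by (simp add: m_assoc invol_cancel)
  then show ?thesis using JW unfolding conj_set_def w_def[symmetric] image_image
    by (simp add: subset_iff cong: image_cong)
qed

lemma conj_set_sub:
  assumes I: "I \<in> conn W S" and J: "J \<subseteq> I"
  shows "conj_set W S I J \<subseteq> I"
  using cj_facts(3)[OF I] J by (auto simp: conj_set_def)

lemma conj_Csub:
  assumes I: "I \<in> conn W S" and J: "J \<in> Csub W S I"
  shows "conj_set W S I J \<in> Csub W S I"
proof -
  define w where "w = longest W S I"
  define c where "c = (\<lambda>s. w \<otimes> s \<otimes> w)"
  have wc: "w \<in> carrier W" and ww: "w \<otimes> w = \<one>" using cj_facts[OF I] by (auto simp: w_def)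
  have cc: "c (c s) = s" if "s \<in> carrier W" for s
    using that wc ww by (simp add: c_def m_assoc invol_cancel)
  have Jc: "J \<in> conn W S" "J \<subset> I" using J by (auto simp: Csub_def)
  have JI: "J \<subseteq> I" using Jc by auto
  have Ip: "I \<noteq> {}" "I \<subseteq> S" "finite (generate W I)" using conn_props[OF I] by auto
  have Jp: "J \<noteq> {}" "J \<subseteq> S" "finite (generate W J)" using conn_props[OF Jc(1)] by auto
  have IW: "I \<subseteq> carrier W" using Ip SW by auto
  define J' where "J' = conj_set W S I J"
  have J'c: "J' = c ` J" by (simp add: J'_def conj_set_def c_def w_def)
  have J'I: "J' \<subseteq> I" using conj_set_sub[OF I JI] J'_def by simp
  have cJ': "c ` J' = J" using conj_set_conj_set[OF I JI] by (simp add: J'_def conj_set_def c_def w_def)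
  have inj: "inj_on c (carrier W)" by (metis cc inj_onI)
  have ne: "J' \<noteq> {}" using Jp J'c by auto
  have fin: "finite (generate W J')"
    using mono_generate[OF J'I] Ip(3) finite_subset by blast
  have nosplit: "\<not> (\<exists>A B. A \<noteq> {} \<and> B \<noteq> {} \<and> J' = A \<union> B \<and> commuting_split W A B)"
  proof
    assume "\<exists>A B. A \<noteq> {} \<and> B \<noteq> {} \<and> J' = A \<union> B \<and> commuting_split W A B"
    then obtain A B where AB: "A \<noteq> {}" "B \<noteq> {}" "J' = A \<union> B" "commuting_split W A B" by blast
    have ABc: "A \<subseteq> carrier W" "B \<subseteq> carrier W" using AB J'I IW by auto
    have e1: "J = c ` A \<union> c ` B" using cJ' AB by auto
    have e2: "c ` A \<noteq> {}" "c ` B \<noteq> {}" using AB by auto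
    have e3: "commuting_split W (c ` A) (c ` B)"
    proof -
      have dj: "c ` A \<inter> c ` B = {}"
      proof (rule ccontr)
        assume "c ` A \<inter> c ` B \<noteq> {}"
        then obtain a b where ab: "a \<in> A" "b \<in> B" "c a = c b" by blast
        then have "a = b" using inj ABc unfolding inj_on_def by blast
        then show False using ab AB(4) by (auto simp: commuting_split_def)
      qed
      have cm: "c a \<otimes> c b = c b \<otimes> c a" if "a \<in> A" "b \<in> B" for a b
      proof -
        have ab: "a \<in> carrier W" "b \<in> carrier W" using that ABc by auto
        have "c a \<otimes> c b = w \<otimes> (a \<otimes> b) \<otimes> w" using ab wc ww by (simp add: c_def m_assoc invol_cancel)
        also have "a \<otimes> b = b \<otimes> a" using AB(4) that unfolding commuting_split_def by blast
        also have "w \<otimes> (b \<otimes> a) \<otimes> w = c b \<otimes> c a" using ab wc ww by (simp add: c_def m_assoc invol_cancel)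
        finally show ?thesis .
      qed
      show ?thesis unfolding commuting_split_def
      proof (intro conjI ballI)
        show "c ` A \<inter> c ` B = {}" by (rule dj)
        fix x y assume "x \<in> c ` A" "y \<in> c ` B"
        then obtain a b where "a \<in> A" "b \<in> B" "x = c a" "y = c b" by blast
        then show "x \<otimes> y = y \<otimes> x" using cm by simp
      qed
    qed
    have ex: "\<exists>A1 B1. A1 \<noteq> {} \<and> B1 \<noteq> {} \<and> J = A1 \<union> B1 \<and> commuting_split W A1 B1"
      by (rule exI[of _ "c ` A"], rule exI[of _ "c ` B"]) (intro conjI e1 e2 e3)
    have "\<not> (\<exists>A1 B1. A1 \<noteq> {} \<and> B1 \<noteq> {} \<and> J = A1 \<union> B1 \<and> commuting_split W A1 B1)"
      using Jc(1) unfolding conn_def connected_subset_def mem_Collect_eq by (elim conjE)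
    then show False using ex by contradiction
  qed
  have J'S: "J' \<subseteq> S" using J'I Ip by auto
  have J'conn: "J' \<in> conn W S" using ne J'S fin nosplit by (simp add: conn_def connected_subset_def)
  have "J' \<noteq> I"
  proof
    assume "J' = I"
    then have cI: "c ` I = J" using cJ' by simp
    have "c ` I \<subseteq> I" using cI JI by simp
    moreover have "card (c ` I) = card I" using card_image inj_on_subset[OF inj IW] by blast
    moreover have "finite I" using Ip finS finite_subset by blast
    ultimately have "c ` I = I" using card_subset_eq by blast
    then show False using cI Jc(2) by simp
  qed
  then show ?thesis using J'conn J'I by (simp add: Csub_def J'_def[symmetric])
qed

end



abbreviation sc :: "real \<Rightarrow> ('a \<Rightarrow> real) \<Rightarrow> ('a \<Rightarrow> real)" where "sc c v \<equiv> (\<lambda>L. c * v L)"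

definition lin_on :: "'w monoid \<Rightarrow> 'w set \<Rightarrow> ('w vec \<Rightarrow> 'w vec) \<Rightarrow> bool" where
  "lin_on W S g \<longleftrightarrow> (\<forall>v\<in>Espace W S. g v = (\<Sum>J\<in>conn W S. sc (v J) (g (eps J))))"

definition pm_basis :: "'w monoid \<Rightarrow> 'w set \<Rightarrow> ('w vec \<Rightarrow> 'w vec) \<Rightarrow> bool" where
  "pm_basis W S g \<longleftrightarrow> (\<forall>J\<in>conn W S. \<exists>K\<in>conn W S. g (eps J) = eps K \<or> g (eps J) = - eps K)"

definition good :: "'w monoid \<Rightarrow> 'w set \<Rightarrow> ('w vec \<Rightarrow> 'w vec) \<Rightarrow> bool" where
  "good W S g \<longleftrightarrow> (\<forall>v\<in>Espace W S. g v \<in> Espace W S) \<and> lin_on W S g \<and> pm_basis W S g"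

lemma Espace_sub: "vm.subspace (Espace W S)"
  unfolding vm.subspace_def by (auto simp: Espace_def)

lemma eps_Espace: "J \<in> conn W S \<Longrightarrow> eps J \<in> Espace W S"
  by (auto simp: Espace_def eps_def)

lemma neg_eps_Espace: "J \<in> conn W S \<Longrightarrow> - eps J \<in> Espace W S"
  by (auto simp: Espace_def eps_def)

lemma expand:
  assumes fin: "finite (conn W S)" and v: "v \<in> Espace W S"
  shows "v = (\<Sum>J\<in>conn W S. sc (v J) (eps J))"
proof
  fix L
  have "(\<Sum>J\<in>conn W S. sc (v J) (eps J)) L = (\<Sum>J\<in>conn W S. if L = J then v J else 0)"
    by (simp add: sum_apply eps_def if_distrib cong: if_cong)
  also have "\<dots> = (if L \<in> conn W S then v L else 0)" using fin by (simp add: sum.delta)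
  also have "\<dots> = v L" using v by (auto simp: Espace_def)
  finally show "v L = (\<Sum>J\<in>conn W S. sc (v J) (eps J)) L" by simp
qed

lemma lin_neg:
  assumes fin: "finite (conn W S)" and g: "lin_on W S g" and K: "K \<in> conn W S"
  shows "g (- eps K) = - g (eps K)"
proof -
  have "g (- eps K) = (\<Sum>J\<in>conn W S. sc ((- eps K) J) (g (eps J)))"
    using g neg_eps_Espace[OF K] unfolding lin_on_def by blast
  also have "\<dots> = - (\<Sum>J\<in>conn W S. sc (eps K J) (g (eps J)))"
    by (simp add: fun_eq_iff sum_apply sum_negf)
  also have "(\<Sum>J\<in>conn W S. sc (eps K J) (g (eps J))) = g (eps K)"
    by (rule sym, rule bspec[OF g[unfolded lin_on_def] eps_Espace[OF K]])
  finally show ?thesis .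
qed

lemma good_cong:
  assumes g: "good W S g" and eq: "\<And>v. v \<in> Espace W S \<Longrightarrow> g' v = g v"
  shows "good W S g'"
proof -
  have e: "\<And>J. J \<in> conn W S \<Longrightarrow> g' (eps J) = g (eps J)" using eq eps_Espace by blast
  have "lin_on W S g'"
    unfolding lin_on_def
  proof
    fix v assume v: "v \<in> Espace W S"
    have "g' v = g v" using eq v by blast
    also have "\<dots> = (\<Sum>J\<in>conn W S. sc (v J) (g (eps J)))" using g v unfolding good_def lin_on_def by blast
    also have "\<dots> = (\<Sum>J\<in>conn W S. sc (v J) (g' (eps J)))" using e by (intro sum.cong) auto
    finally show "g' v = (\<Sum>J\<in>conn W S. sc (v J) (g' (eps J)))" .
  qed
  moreover have "pm_basis W S g'" using g e by (simp add: good_def pm_basis_def)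
  moreover have "\<forall>v\<in>Espace W S. g' v \<in> Espace W S" using g eq by (simp add: good_def)
  ultimately show ?thesis by (simp add: good_def)
qed

lemma good_comp:
  assumes fin: "finite (conn W S)" and g: "good W S g" and h: "good W S h"
  shows "good W S (\<lambda>v. g (h v))"
proof -
  have gl: "lin_on W S g" and hl: "lin_on W S h" using g h by (auto simp: good_def)
  have hm: "\<And>v. v \<in> Espace W S \<Longrightarrow> h v \<in> Espace W S" and gm: "\<And>v. v \<in> Espace W S \<Longrightarrow> g v \<in> Espace W S"
    using g h by (auto simp: good_def)
  have maps: "\<forall>v\<in>Espace W S. g (h v) \<in> Espace W S" using gm hm by blast
  have pm: "pm_basis W S (\<lambda>v. g (h v))"
    unfolding pm_basis_def
  proof
    fix J assume J: "J \<in> conn W S"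
    obtain K where K: "K \<in> conn W S" "h (eps J) = eps K \<or> h (eps J) = - eps K"
      using h J by (auto simp: good_def pm_basis_def)
    obtain K' where K': "K' \<in> conn W S" "g (eps K) = eps K' \<or> g (eps K) = - eps K'"
      using g K(1) by (auto simp: good_def pm_basis_def)
    have "g (- eps K) = - g (eps K)" by (rule lin_neg[OF fin gl K(1)])
    then show "\<exists>K\<in>conn W S. g (h (eps J)) = eps K \<or> g (h (eps J)) = - eps K"
      using K K' by auto
  qed
  have lin: "lin_on W S (\<lambda>v. g (h v))"
    unfolding lin_on_def
  proof
    fix v assume v: "v \<in> Espace W S"
    define y where "y = h v"
    have y: "y = (\<Sum>J\<in>conn W S. sc (v J) (h (eps J)))" using hl v unfolding lin_on_def y_def by blast
    have yE: "y \<in> Espace W S" using hm v by (simp add: y_def)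
    have gy: "g y = (\<Sum>K\<in>conn W S. sc (y K) (g (eps K)))" using gl yE unfolding lin_on_def by blast
    have ghe: "g (h (eps J)) = (\<Sum>K\<in>conn W S. sc (h (eps J) K) (g (eps K)))" if J: "J \<in> conn W S" for J
      using gl hm[OF eps_Espace[OF J]] unfolding lin_on_def by blast
    show "g (h v) = (\<Sum>J\<in>conn W S. sc (v J) (g (h (eps J))))"
    proof
      fix L
      have "g (h v) L = g y L" by (simp add: y_def)
      also have "\<dots> = (\<Sum>K\<in>conn W S. y K * g (eps K) L)" unfolding gy by (simp add: sum_apply)
      also have "\<dots> = (\<Sum>K\<in>conn W S. (\<Sum>J\<in>conn W S. v J * h (eps J) K) * g (eps K) L)"
        unfolding y by (simp add: sum_apply)
      also have "\<dots> = (\<Sum>K\<in>conn W S. \<Sum>J\<in>conn W S. v J * (h (eps J) K * g (eps K) L))"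
        by (simp add: sum_distrib_right mult.assoc)
      also have "\<dots> = (\<Sum>J\<in>conn W S. \<Sum>K\<in>conn W S. v J * (h (eps J) K * g (eps K) L))"
        by (rule sum.swap)
      also have "\<dots> = (\<Sum>J\<in>conn W S. v J * (\<Sum>K\<in>conn W S. h (eps J) K * g (eps K) L))"
        by (simp add: sum_distrib_left)
      also have "\<dots> = (\<Sum>J\<in>conn W S. v J * g (h (eps J)) L)"
        using ghe by (intro sum.cong) (simp_all add: sum_apply)
      finally show "g (h v) L = (\<Sum>J\<in>conn W S. sc (v J) (g (h (eps J)))) L" by (simp add: sum_apply)
    qed
  qed
  show ?thesis using maps pm lin by (simp add: good_def)
qed

lemma B0_add1: "B0 W S (f + g) u = B0 W S f u + B0 W S g u"
  by (simp add: B0_def sum.distrib distrib_right)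
lemma B0_sc1: "B0 W S (sc c f) u = c * B0 W S f u"
  by (simp add: B0_def sum_distrib_left mult.assoc)
lemma B0_add2: "B0 W S f (u + v) = B0 W S f u + B0 W S f v"
  by (simp add: B0_def sum.distrib distrib_left)
lemma B0_sc2: "B0 W S f (sc c u) = c * B0 W S f u"
  by (simp add: B0_def sum_distrib_left mult.left_commute)
lemma B0_zero2: "B0 W S f 0 = 0"
  by (simp add: B0_def)
lemma B0_diff2: "B0 W S f (u - v) = B0 W S f u - B0 W S f v"
  by (simp add: B0_def sum_subtractf right_diff_distrib)
lemma B0_eps2: "finite (conn W S) \<Longrightarrow> K \<in> conn W S \<Longrightarrow> B0 W S f (eps K) = f K"
  by (simp add: B0_def eps_def if_distrib cong: if_cong)




context cox begin

definition GI where "GI I = (\<lambda>J. eps J - eps (conj_set W S I J)) ` Csub W S I"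

lemma U_span: "U_I W S I = vm.span (insert (eps I) (GI I))"
proof -
  have "U_I W S I = {x. \<exists>k. x - sc k (eps I) \<in> vm.span (GI I)}"
  proof (intro Set.set_eqI iffI)
    fix x assume "x \<in> U_I W S I"
    then obtain c e where "e \<in> E_I W S I" "x = sc c (eps I) + e" by (auto simp: U_I_def)
    then show "x \<in> {x. \<exists>k. x - sc k (eps I) \<in> vm.span (GI I)}"
      by (auto simp: E_I_def vspan_eq GI_def intro!: exI[of _ c])
  next
    fix x assume "x \<in> {x. \<exists>k. x - sc k (eps I) \<in> vm.span (GI I)}"
    then obtain k where k: "x - sc k (eps I) \<in> vm.span (GI I)" by blast
    have "x = sc k (eps I) + (x - sc k (eps I))" by simp
    then show "x \<in> U_I W S I" using k unfolding U_I_def E_I_def vspan_eq GI_def by blast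
  qed
  then show ?thesis by (simp add: vm.span_insert)
qed

lemma U_sub: "vm.subspace (U_I W S I)"
  by (simp add: U_span)

lemma F_sub: "vm.subspace (F_I W S I)"
proof (rule vm.subspaceI)
  show "0 \<in> F_I W S I" by (simp add: F_I_def Espace_def B0_def)
next
  fix x y assume "x \<in> F_I W S I" "y \<in> F_I W S I"
  then show "x + y \<in> F_I W S I" by (simp add: F_I_def Espace_def B0_add1)
next
  fix c and x :: "'w vec" assume "x \<in> F_I W S I"
  then show "sc c x \<in> F_I W S I" by (simp add: F_I_def Espace_def B0_sc1)
qed

lemma F_crit:
  assumes I: "I \<in> conn W S" and f: "f \<in> Espace W S" and fI: "f I = 0"
    and fK: "\<And>K. K \<in> Csub W S I \<Longrightarrow> f K = f (conj_set W S I K)"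
  shows "f \<in> F_I W S I"
proof -
  have "B0 W S f u = 0" if u: "u \<in> U_I W S I" for u
  proof -
    have "u \<in> vm.span (insert (eps I) (GI I))" using u U_span by simp
    then show ?thesis
    proof (induct rule: vm.span_induct_alt)
      case base then show ?case by (simp add: B0_def)
    next
      case (step c x y)
      have "B0 W S f x = 0"
      proof (cases "x = eps I")
        case True then show ?thesis using fI B0_eps2[OF finite_conn I] by simp
      next
        case False
        then obtain K where K: "K \<in> Csub W S I" "x = eps K - eps (conj_set W S I K)"
          using step(1) by (auto simp: GI_def)
        have Kc: "K \<in> conn W S" "conj_set W S I K \<in> conn W S"
          using K(1) conj_Csub[OF I K(1)] by (auto simp: Csub_def)
        show ?thesis using K Kc fK[OF K(1)] by (simp add: B0_diff2 B0_eps2[OF finite_conn])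
      qed
      moreover have "B0 W S f (\<lambda>a. c * x a + y a) = c * B0 W S f x + B0 W S f y"
        by (simp add: B0_def distrib_left sum.distrib sum_distrib_left mult.left_commute)
      ultimately show ?case using step(2) by simp
    qed
  qed
  then show ?thesis using f by (simp add: F_I_def)
qed

lemma rho_eq:
  assumes I: "I \<in> conn W S" and u: "u \<in> U_I W S I" and f: "f \<in> F_I W S I"
  shows "rho_I W S I (u + f) = f - u"
  unfolding rho_I_def
proof (rule the_equality)
  show "\<exists>u'\<in>U_I W S I. \<exists>f'\<in>F_I W S I. u + f = u' + f' \<and> f - u = f' - u'" using u f by blast
next
  fix w assume "\<exists>u'\<in>U_I W S I. \<exists>f'\<in>F_I W S I. u + f = u' + f' \<and> w = f' - u'"
  then obtain u' f' where u': "u' \<in> U_I W S I" and f': "f' \<in> F_I W S I" and e: "u + f = u' + f'" "w = f' - u'"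
    by blast
  define d where "d = f' - f"
  have dF: "d \<in> F_I W S I" using vm.subspace_diff[OF F_sub f' f] by (simp add: d_def)
  have d2: "d = u - u'" using e by (simp add: d_def algebra_simps)
  have dU: "d \<in> U_I W S I" using vm.subspace_diff[OF U_sub u u'] by (simp add: d2)
  have "B0 W S d d = 0" using dF dU by (simp add: F_I_def)
  then have "(\<Sum>J\<in>conn W S. d J * d J) = 0" by (simp add: B0_def)
  then have "\<forall>J\<in>conn W S. d J * d J = 0"
    using sum_nonneg_eq_0_iff[OF finite_conn] by (simp add: sum_nonneg_eq_0_iff[OF finite_conn])
  moreover have "d \<in> Espace W S" using dF by (simp add: F_I_def)
  ultimately have "d = 0" by (auto simp: Espace_def fun_eq_iff)
  then have "f' = f" "u' = u" using d2 by (simp_all add: d_def)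
  then show "w = f - u" using e by simp
qed

lemma Csub_props:
  assumes I: "I \<in> conn W S" and J: "J \<in> Csub W S I"
  shows "J \<in> conn W S" "J \<subseteq> I" "J \<noteq> I" "conj_set W S I J \<in> Csub W S I"
    "conj_set W S I J \<in> conn W S" "conj_set W S I J \<noteq> I"
    "conj_set W S I (conj_set W S I J) = J"
  using J conj_Csub[OF I J] conj_set_conj_set[OF I] by (auto simp: Csub_def)

definition rval where
  "rval I J = (if J = I then - eps I else if J \<in> Csub W S I then eps (conj_set W S I J) else eps J)"

lemma eps_decomp:
  assumes I: "I \<in> conn W S" and J: "J \<in> conn W S"
  shows "\<exists>u\<in>U_I W S I. \<exists>f\<in>F_I W S I. eps J = u + f \<and> f - u = rval I J"
proof (cases "J = I")
  case True
  have "eps I \<in> U_I W S I" by (simp add: U_span vm.span_base)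
  moreover have "(0::'w vec) \<in> F_I W S I" using vm.subspace_0[OF F_sub] .
  ultimately show ?thesis using True by (intro bexI[of _ "eps I"] bexI[of _ 0]) (simp_all add: rval_def)
next
  case notI: False
  show ?thesis
  proof (cases "J \<in> Csub W S I")
    case True
    note P = Csub_props[OF I True]
    define J' where "J' = conj_set W S I J"
    define u where "u = sc (1/2) (eps J - eps J')"
    define f where "f = sc (1/2) (eps J + eps J')"
    have "eps J - eps J' \<in> U_I W S I" unfolding U_span GI_def J'_def
      by (rule vm.span_base) (use True in blast)
    then have uU: "u \<in> U_I W S I" unfolding u_def using vm.subspace_scale[OF U_sub] by blast
    have fF: "f \<in> F_I W S I"
    proof (rule F_crit[OF I])
      show "f \<in> Espace W S" using P by (auto simp: f_def Espace_def eps_def J'_def)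
      show "f I = 0" using P notI by (auto simp: f_def eps_def J'_def)
      fix K assume K: "K \<in> Csub W S I"
      note Q = Csub_props[OF I K]
      have a: "(conj_set W S I K = J) = (K = J')" using P Q J'_def by metis
      have b: "(conj_set W S I K = J') = (K = J)" using P Q J'_def by metis
      show "f K = f (conj_set W S I K)" unfolding f_def eps_def using a b by auto
    qed
    have "eps J = u + f" by (simp add: u_def f_def fun_eq_iff algebra_simps)
    moreover have "f - u = rval I J" using notI True by (simp add: u_def f_def rval_def J'_def fun_eq_iff algebra_simps)
    ultimately show ?thesis using uU fF by blast
  next
    case False
    have fF: "eps J \<in> F_I W S I"
    proof (rule F_crit[OF I])
      show "eps J \<in> Espace W S" using J by (rule eps_Espace)
      show "eps J I = 0" using notI by (simp add: eps_def)
      fix K assume K: "K \<in> Csub W S I"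
      note Q = Csub_props[OF I K]
      show "eps J K = eps J (conj_set W S I K)" using K Q False by (auto simp: eps_def)
    qed
    have "(0::'w vec) \<in> U_I W S I" using vm.subspace_0[OF U_sub] .
    then show ?thesis using fF notI False by (intro bexI[of _ 0] bexI[of _ "eps J"]) (simp_all add: rval_def)
  qed
qed

lemma rho_eps: "I \<in> conn W S \<Longrightarrow> J \<in> conn W S \<Longrightarrow> rho_I W S I (eps J) = rval I J"
  using eps_decomp rho_eq by metis

lemma rval_pm: "I \<in> conn W S \<Longrightarrow> J \<in> conn W S \<Longrightarrow> \<exists>K\<in>conn W S. rval I J = eps K \<or> rval I J = - eps K"
  using Csub_props by (auto simp: rval_def)

lemma rval_E: "I \<in> conn W S \<Longrightarrow> J \<in> conn W S \<Longrightarrow> rval I J \<in> Espace W S"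
  using rval_pm eps_Espace neg_eps_Espace by metis

lemma rho_lin:
  assumes I: "I \<in> conn W S" and v: "v \<in> Espace W S"
  shows "rho_I W S I v = (\<Sum>J\<in>conn W S. sc (v J) (rho_I W S I (eps J)))"
proof -
  have "\<forall>J\<in>conn W S. \<exists>p. fst p \<in> U_I W S I \<and> snd p \<in> F_I W S I \<and> eps J = fst p + snd p \<and> snd p - fst p = rval I J"
    using eps_decomp[OF I] by fastforce
  then obtain P where P: "\<And>J. J \<in> conn W S \<Longrightarrow> fst (P J) \<in> U_I W S I \<and> snd (P J) \<in> F_I W S I \<and>
      eps J = fst (P J) + snd (P J) \<and> snd (P J) - fst (P J) = rval I J"
    by metis
  define u where "u = (\<Sum>J\<in>conn W S. sc (v J) (fst (P J)))"
  define f where "f = (\<Sum>J\<in>conn W S. sc (v J) (snd (P J)))"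
  have uU: "u \<in> U_I W S I" unfolding u_def
    by (rule vm.subspace_sum[OF U_sub]) (use P vm.subspace_scale[OF U_sub] in blast)
  have fF: "f \<in> F_I W S I" unfolding f_def
    by (rule vm.subspace_sum[OF F_sub]) (use P vm.subspace_scale[OF F_sub] in blast)
  have "u + f = (\<Sum>J\<in>conn W S. sc (v J) (eps J))"
  proof
    fix L
    have "(u + f) L = (\<Sum>J\<in>conn W S. v J * (fst (P J) L + snd (P J) L))"
      by (simp add: u_def f_def sum_apply distrib_left sum.distrib)
    also have "\<dots> = (\<Sum>J\<in>conn W S. v J * eps J L)"
      using P by (intro sum.cong) (auto simp: fun_eq_iff)
    finally show "(u + f) L = (\<Sum>J\<in>conn W S. sc (v J) (eps J)) L" by (simp add: sum_apply)
  qed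
  then have vuf: "v = u + f" using expand[OF finite_conn v] by simp
  have "rho_I W S I v = f - u" using rho_eq[OF I uU fF] vuf by simp
  also have "\<dots> = (\<Sum>J\<in>conn W S. sc (v J) (rho_I W S I (eps J)))"
  proof
    fix L
    have "(f - u) L = (\<Sum>J\<in>conn W S. v J * (snd (P J) L - fst (P J) L))"
      by (simp add: u_def f_def sum_apply right_diff_distrib sum_subtractf)
    also have "\<dots> = (\<Sum>J\<in>conn W S. v J * rho_I W S I (eps J) L)"
      using P rho_eps[OF I] by (intro sum.cong) (auto simp: fun_eq_iff)
    finally show "(f - u) L = (\<Sum>J\<in>conn W S. sc (v J) (rho_I W S I (eps J))) L" by (simp add: sum_apply)
  qed
  finally show ?thesis .
qed

lemma good_rho: "I \<in> conn W S \<Longrightarrow> good W S (rho_I W S I)"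
proof -
  assume I: "I \<in> conn W S"
  have lin: "lin_on W S (rho_I W S I)" using rho_lin[OF I] by (simp add: lin_on_def)
  have pm: "pm_basis W S (rho_I W S I)" using rho_eps[OF I] rval_pm[OF I] by (simp add: pm_basis_def)
  have maps: "rho_I W S I v \<in> Espace W S" if v: "v \<in> Espace W S" for v
  proof -
    have "(\<Sum>J\<in>conn W S. sc (v J) (rho_I W S I (eps J))) \<in> Espace W S"
    proof (rule vm.subspace_sum[OF Espace_sub])
      fix J assume J: "J \<in> conn W S"
      show "sc (v J) (rho_I W S I (eps J)) \<in> Espace W S"
        using vm.subspace_scale[OF Espace_sub rval_E[OF I J]] rho_eps[OF I J] by simp
    qed
    then show ?thesis using rho_lin[OF I v] by simp
  qed
  show ?thesis using lin pm maps by (simp add: good_def)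
qed

end



theorem mainTheorem12:
  fixes W :: "'w monoid" and S :: "'w set"
    and C :: "'c monoid" and \<gamma> :: "'w set \<Rightarrow> 'c"
    and \<rho> :: "'c \<Rightarrow> 'w vec \<Rightarrow> 'w vec"
  assumes cox: "coxeter_system W S"
    and cactus: "cactus_group W S C \<gamma>"
    and rho_into: "\<And>x v. x \<in> carrier C \<Longrightarrow> v \<in> Espace W S \<Longrightarrow> \<rho> x v \<in> Espace W S"
    and rho_hom: "\<And>x y v. x \<in> carrier C \<Longrightarrow> y \<in> carrier C \<Longrightarrow> v \<in> Espace W S \<Longrightarrow>
                    \<rho> (x \<otimes>\<^bsub>C\<^esub> y) v = \<rho> x (\<rho> y v)"
    and rho_gen: "\<And>I v. I \<in> conn W S \<Longrightarrow> v \<in> Espace W S \<Longrightarrow> \<rho> (\<gamma> I) v = rho_I W S I v"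
  shows "(\<forall>x \<in> carrier C. \<forall>J \<in> conn W S. \<exists>K \<in> conn W S.
            \<rho> x (eps J) = eps K \<or> \<rho> x (eps J) = - eps K)
       \<and> finite ((\<lambda>x. restrict (\<rho> x) (Espace W S)) ` carrier C)
       \<and> (infinite (carrier C) \<longrightarrow> \<not> inj_on (\<lambda>x. restrict (\<rho> x) (Espace W S)) (carrier C))
       \<and> (\<forall>H. subgroup H C \<longrightarrow> infinite H \<longrightarrow>
            \<not> inj_on (\<lambda>x. restrict (\<rho> x) (Espace W S)) H)"
proof -
  interpret cox W S by (rule cox.intro[OF cox])
  have gC: "group C" and rels: "cactus_rels W S C \<gamma>" and genC: "generate C (\<gamma> ` conn W S) = carrier C"
    using cactus by (auto simp: cactus_group_def)
  have gam_c: "\<gamma> ` conn W S \<subseteq> carrier C" and gam_inv: "\<And>I. I \<in> conn W S \<Longrightarrow> \<gamma> I \<otimes>\<^bsub>C\<^esub> \<gamma> I = \<one>\<^bsub>C\<^esub>"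
    using rels by (auto simp: cactus_rels_def)
  have carC: "carrier C = {wprod C as | as. set as \<subseteq> \<gamma> ` conn W S}"
    using group.generate_wprod[OF gC gam_c] gam_inv genC by auto
  have gamc: "\<And>I. I \<in> conn W S \<Longrightarrow> \<gamma> I \<in> carrier C" using gam_c by auto
  have good_gam: "good W S (\<rho> (\<gamma> I))" if I: "I \<in> conn W S" for I
    using good_cong[OF good_rho[OF I]] rho_gen[OF I] by blast
  have good_one: "good W S (\<rho> \<one>\<^bsub>C\<^esub>)"
  proof (cases "conn W S = {}")
    case True
    have z: "v = 0" if "v \<in> Espace W S" for v :: "'w vec"
      using that True by (auto simp: Espace_def fun_eq_iff)
    have "\<rho> \<one>\<^bsub>C\<^esub> v \<in> Espace W S" if "v \<in> Espace W S" for v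
      using rho_into[OF monoid.one_closed[OF group.is_monoid[OF gC]] that] .
    then show ?thesis using z True
      by (auto simp: good_def lin_on_def pm_basis_def)
  next
    case False
    then obtain I0 where I0: "I0 \<in> conn W S" by blast
    have "\<rho> \<one>\<^bsub>C\<^esub> v = \<rho> (\<gamma> I0) (\<rho> (\<gamma> I0) v)" if "v \<in> Espace W S" for v
      using rho_hom[OF gamc[OF I0] gamc[OF I0] that] gam_inv[OF I0] by simp
    then show ?thesis using good_cong[OF good_comp[OF finite_conn good_gam[OF I0] good_gam[OF I0]]] by blast
  qed
  have good_all: "good W S (\<rho> x)" if x: "x \<in> carrier C" for x
  proof -
    obtain as where as: "set as \<subseteq> \<gamma> ` conn W S" "x = wprod C as" using x carC by auto
    have "good W S (\<rho> (wprod C as))" using as(1)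
    proof (induct as)
      case Nil then show ?case using good_one by simp
    next
      case (Cons a as)
      obtain I where I: "I \<in> conn W S" "a = \<gamma> I" using Cons(2) by auto
      have yc: "wprod C as \<in> carrier C" using Cons(2) gam_c group.wprod_closed[OF gC] by auto
      have "\<rho> (wprod C (a # as)) v = \<rho> (\<gamma> I) (\<rho> (wprod C as) v)" if "v \<in> Espace W S" for v
        using rho_hom[OF gamc[OF I(1)] yc that] I by simp
      then show ?case using good_cong[OF good_comp[OF finite_conn good_gam[OF I(1)] Cons(1)]] Cons(2) by auto
    qed
    then show ?thesis using as by simp
  qed
  have part1: "\<forall>x \<in> carrier C. \<forall>J \<in> conn W S. \<exists>K \<in> conn W S.
            \<rho> x (eps J) = eps K \<or> \<rho> x (eps J) = - eps K"
    using good_all by (simp add: good_def pm_basis_def)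
  define R where "R x = restrict (\<rho> x) (Espace W S)" for x
  define B where "B = eps ` conn W S \<union> (\<lambda>K. - eps K) ` conn W S"
  define \<Phi> where "\<Phi> \<phi> = restrict (\<lambda>v. \<Sum>J\<in>conn W S. sc (v J) (\<phi> J)) (Espace W S)" for \<phi> :: "'w set \<Rightarrow> 'w vec"
  have sub: "R ` carrier C \<subseteq> \<Phi> ` (conn W S \<rightarrow>\<^sub>E B)"
  proof
    fix y assume "y \<in> R ` carrier C"
    then obtain x where x: "x \<in> carrier C" "y = R x" by blast
    define \<phi> where "\<phi> = restrict (\<lambda>J. \<rho> x (eps J)) (conn W S)"
    have "\<phi> \<in> conn W S \<rightarrow>\<^sub>E B"
    proof (rule PiE_I)
      fix J assume J: "J \<in> conn W S"
      then obtain K where "K \<in> conn W S" "\<rho> x (eps J) = eps K \<or> \<rho> x (eps J) = - eps K"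
        using part1 x(1) by blast
      then show "\<phi> J \<in> B" using J by (auto simp: \<phi>_def B_def)
    qed (simp add: \<phi>_def)
    moreover have "R x = \<Phi> \<phi>"
    proof
      fix v
      show "R x v = \<Phi> \<phi> v"
      proof (cases "v \<in> Espace W S")
        case True
        have "\<rho> x v = (\<Sum>J\<in>conn W S. sc (v J) (\<rho> x (eps J)))"
          using good_all[OF x(1)] True unfolding good_def lin_on_def by blast
        also have "\<dots> = (\<Sum>J\<in>conn W S. sc (v J) (\<phi> J))" by (intro sum.cong) (auto simp: \<phi>_def)
        finally show ?thesis using True by (simp add: R_def \<Phi>_def)
      qed (simp add: R_def \<Phi>_def)
    qed
    ultimately show "y \<in> \<Phi> ` (conn W S \<rightarrow>\<^sub>E B)" using x by blast
  qed
  have finB: "finite B" using finite_conn by (simp add: B_def)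
  have fin: "finite (R ` carrier C)"
    using finite_subset[OF sub finite_imageI[OF finite_PiE[OF finite_conn]]] finB by blast
  have part3: "infinite (carrier C) \<longrightarrow> \<not> inj_on R (carrier C)"
    using fin finite_imageD by blast
  have part4: "\<forall>H. subgroup H C \<longrightarrow> infinite H \<longrightarrow> \<not> inj_on R H"
  proof (intro allI impI)
    fix H assume H: "subgroup H C" "infinite H"
    have "R ` H \<subseteq> R ` carrier C" using subgroup.subset[OF H(1)] by blast
    then have "finite (R ` H)" using fin finite_subset by blast
    then show "\<not> inj_on R H" using H(2) finite_imageD by blast
  qed
  show ?thesis using part1 fin part3 part4 unfolding R_def by blast
qed


end
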